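(* Let $\mu,\pi\in\mathcal P(\mathbb R^d)$, let $\nu$ be $\alpha$-strongly log-concave (i.e. $\nabla^2f\succeq\alpha I$, $\alpha>0$), and suppose $f$ satisfies conditions (a)–(b) below with constant $L$. Let $T>0$, $h\ge0$ with $LT^2\le\frac1{20}$. Then for every integer $k\ge0$, \[ W_\psi(\mu\tilde{\mathrm P}_{T,h}^k,\pi\tilde{\mathrm P}_{T,h}^k)\le\Big(1-\frac{\alpha T^2}{10}\Big)^kW_\psi(\mu,\pi). \]
   Context: Let $f:\mathbb R^d\to\mathbb R$, $\nu$ the probability measure with density proportional to $e^{-f}$. Conditions: (a) $f$ has global minimum at $0$, $f(0)=0$; (b) $f\in C^2$, $\|\nabla^2f(x)\|_{op}\le L$ for all $x$. For $h>0$ with $T/h\in\mathbb N$ (always assumed), $\tilde q_{T,h}(x,v)=x_N$, $N=T/h$, where $x_0=x,v_0=v$, $x_{j+1}=x_j+hv_j-\frac{h^2}2\nabla f(x_j)$, $v_{j+1}=v_j-\frac h2(\nabla f(x_j)+\nabla f(x_{j+1}))$; for $h=0$, $\tilde q_{T,0}(x,v)$ is the time-$T$ position of the solution of $\dot x=v,\dot v=-\nabla f(x)$ from $(x,v)$. $\tilde{\mathrm P}_{T,h}$ maps $\rho$ to the law of $\tilde q_{T,h}(X,\xi)$, $X\sim\rho$, $\xi\sim\mathcal N(0,I_d)$ independent; $\tilde{\mathrm P}^k_{T,h}$ is the $k$-fold iterate. $\|X\|_\psi=\inf\{\lambda>0:\mathbb E[e^{\|X\|^2/\lambda^2}]\le2\}$;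 $W_\psi(\mu,\pi)=\inf$ of $\|X-Y\|_\psi$ over couplings $(X,Y)$ of $\mu,\pi$. *)

theory Defs
  imports "HOL-Probability.Probability"
begin

definition std_gauss :: "'a::euclidean_space measure" where
  "std_gauss = density lborel
     (\<lambda>v. ennreal ((2 * pi) powr (- real DIM('a) / 2) * exp (- ((norm v)^2) / 2)))"

definition leap_step :: "('a::euclidean_space \<Rightarrow> 'a) \<Rightarrow> real \<Rightarrow> 'a \<times> 'a \<Rightarrow> 'a \<times> 'a" where
  "leap_step grad h z =
     (let x = fst z; v = snd z;
          x' = x + h *\<^sub>R v - (h^2 / 2) *\<^sub>R grad x
      in (x', v - (h / 2) *\<^sub>R (grad x + grad x')))"

definition ham_flow :: "('a::euclidean_space \<Rightarrow> 'a) \<Rightarrow> real \<Rightarrow> 'a \<Rightarrow> 'a \<Rightarrow> 'a" where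
  "ham_flow grad T x v =
     fst ((THE z :: real \<Rightarrow> 'a \<times> 'a. z 0 = (x, v) \<and>
            (\<forall>t. (z has_vector_derivative (snd (z t), - grad (fst (z t)))) (at t))) T)"

definition q_th :: "('a::euclidean_space \<Rightarrow> 'a) \<Rightarrow> real \<Rightarrow> real \<Rightarrow> 'a \<Rightarrow> 'a \<Rightarrow> 'a" where
  "q_th grad T h x v =
     (if h = 0 then ham_flow grad T x v
      else fst ((leap_step grad h ^^ nat \<lfloor>T / h\<rfloor>) (x, v)))"

definition P_th :: "('a::euclidean_space \<Rightarrow> 'a) \<Rightarrow> real \<Rightarrow> real \<Rightarrow> 'a measure \<Rightarrow> 'a measure" where
  "P_th grad T h \<rho> = distr (\<rho> \<Otimes>\<^sub>M std_gauss) borel (\<lambda>(x, v). q_th grad T h x v)"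

definition psi_norm :: "'b measure \<Rightarrow> ('b \<Rightarrow> 'a::real_normed_vector) \<Rightarrow> ereal" where
  "psi_norm M Z = Inf {ereal l | l. l > 0 \<and>
      (\<integral>\<^sup>+ w. ennreal (exp ((norm (Z w))^2 / l^2)) \<partial>M) \<le> 2}"

definition couplings :: "'a::euclidean_space measure \<Rightarrow> 'a measure \<Rightarrow> ('a \<times> 'a) measure set" where
  "couplings \<mu> \<pi> = {\<gamma>. prob_space \<gamma> \<and> sets \<gamma> = sets (borel \<Otimes>\<^sub>M borel) \<and>
      distr \<gamma> borel fst = \<mu> \<and> distr \<gamma> borel snd = \<pi>}"

definition W_psi :: "'a::euclidean_space measure \<Rightarrow> 'a measure \<Rightarrow> ereal" where
  "W_psi \<mu> \<pi> = (INF \<gamma>\<in>couplings \<mu> \<pi>. psi_norm \<gamma> (\<lambda>(x, y). x - y))"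

end

theory Submission
  imports Defs
begin

locale hmc_pot =
  fixes f :: "'a::euclidean_space \<Rightarrow> real" and grad :: "'a \<Rightarrow> 'a"
    and H :: "'a \<Rightarrow> 'a \<Rightarrow>\<^sub>L 'a" and L \<alpha> :: real
  assumes grad: "\<And>x. (f has_derivative (\<lambda>u. grad x \<bullet> u)) (at x)"
    and hess: "\<And>x. (grad has_derivative blinfun_apply (H x)) (at x)"
    and hess_bound: "\<And>x. norm (H x) \<le> L"
    and alpha_pos: "\<alpha> > 0"
    and strong: "\<And>x u. \<alpha> * (norm u)^2 \<le> u \<bullet> blinfun_apply (H x) u"
begin

lemma H_bound: "norm (blinfun_apply (H x) u) \<le> L * norm u"
  by (meson hess_bound mult_right_mono norm_blinfun norm_ge_zero order_trans)

lemma alpha_le_L: "\<alpha> \<le> L"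
proof -
  obtain u :: 'a where u: "u \<in> Basis" using nonempty_Basis by blast
  then have nu: "norm u = 1" by simp
  have "\<alpha> = \<alpha> * (norm u)^2" using nu by simp
  also have "\<dots> \<le> u \<bullet> blinfun_apply (H 0) u" by (rule strong)
  also have "\<dots> \<le> norm u * norm (blinfun_apply (H 0) u)" by (rule norm_cauchy_schwarz)
  also have "\<dots> \<le> L" using H_bound[of 0 u] nu by simp
  finally show ?thesis .
qed

lemma L_pos: "L > 0" using alpha_le_L alpha_pos by linarith

lemma grad_lipschitz: "norm (grad x - grad y) \<le> L * norm (x - y)"
proof -
  have "norm (grad x - grad y) \<le> L * norm (x - y)"
    by (rule differentiable_bound[where S=UNIV and f'="\<lambda>x. blinfun_apply (H x)"])
       (auto simp: hess has_derivative_at_withinI norm_blinfun.rep_eq[symmetric] hess_bound)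
  then show ?thesis .
qed

lemma line_f_deriv:
  "((\<lambda>t. f (a + t *\<^sub>R d)) has_real_derivative (grad (a + t *\<^sub>R d) \<bullet> d)) (at t)"
proof -
  have l: "((\<lambda>t. a + t *\<^sub>R d) has_derivative (\<lambda>s. s *\<^sub>R d)) (at t)"
    by (auto intro!: derivative_eq_intros)
  have "((\<lambda>t. f (a + t *\<^sub>R d)) has_derivative (\<lambda>s. grad (a + t *\<^sub>R d) \<bullet> (s *\<^sub>R d))) (at t)"
    using has_derivative_compose[OF l grad] by (simp add: o_def)
  then show ?thesis
    by (simp add: has_field_derivative_def mult.commute[of _ "grad _ \<bullet> d"] fun_eq_iff)
qed

lemma line_grad_deriv:
  "((\<lambda>t. grad (a + t *\<^sub>R d) \<bullet> d) has_real_derivative (d \<bullet> blinfun_apply (H (a + t *\<^sub>R d)) d)) (at t)"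
proof -
  have l: "((\<lambda>t. a + t *\<^sub>R d) has_derivative (\<lambda>s. s *\<^sub>R d)) (at t)"
    by (auto intro!: derivative_eq_intros)
  have g: "((\<lambda>t. grad (a + t *\<^sub>R d)) has_derivative (\<lambda>s. blinfun_apply (H (a + t *\<^sub>R d)) (s *\<^sub>R d))) (at t)"
    using has_derivative_compose[OF l hess] by (simp add: o_def)
  have "((\<lambda>t. grad (a + t *\<^sub>R d) \<bullet> d) has_derivative (\<lambda>s. blinfun_apply (H (a + t *\<^sub>R d)) (s *\<^sub>R d) \<bullet> d)) (at t)"
    using has_derivative_inner_left[OF g] .
  then show ?thesis
    by (simp add: has_field_derivative_def blinfun.scaleR_right inner_commute mult.commute[of _ "d \<bullet> _"])
qed

lemma strong_mono: "\<alpha> * (norm (x - y))^2 \<le> (grad x - grad y) \<bullet> (x - y)"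
proof (cases "x = y")
  case True then show ?thesis by simp
next
  case False
  define d where "d = x - y"
  obtain z where z: "0 < z" "z < 1"
    "grad (y + 1 *\<^sub>R d) \<bullet> d - grad (y + 0 *\<^sub>R d) \<bullet> d = (1 - 0) * (d \<bullet> blinfun_apply (H (y + z *\<^sub>R d)) d)"
    using MVT2[of 0 1 "\<lambda>t. grad (y + t *\<^sub>R d) \<bullet> d", OF _ line_grad_deriv] by auto
  have "\<alpha> * (norm d)^2 \<le> d \<bullet> blinfun_apply (H (y + z *\<^sub>R d)) d" by (rule strong)
  also have "\<dots> = (grad x - grad y) \<bullet> d" using z(3) by (simp add: d_def inner_diff_left)
  finally show ?thesis by (simp add: d_def)
qed

lemma mono_grad: "0 \<le> (grad x - grad y) \<bullet> (x - y)"
  using strong_mono[of x y] alpha_pos by (smt (verit) mult_nonneg_nonneg zero_le_power2)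

lemma convex_lower: "f a + grad a \<bullet> (b - a) \<le> f b"
proof -
  define d where "d = b - a"
  obtain z where z: "0 < z" "z < 1"
    "f (a + 1 *\<^sub>R d) - f (a + 0 *\<^sub>R d) = (1 - 0) * (grad (a + z *\<^sub>R d) \<bullet> d)"
    using MVT2[of 0 1 "\<lambda>t. f (a + t *\<^sub>R d)", OF _ line_f_deriv] by auto
  have "0 \<le> (grad (a + z *\<^sub>R d) - grad a) \<bullet> ((a + z *\<^sub>R d) - a)" by (rule mono_grad)
  then have "0 \<le> z * ((grad (a + z *\<^sub>R d) - grad a) \<bullet> d)" by simp
  then have "0 \<le> (grad (a + z *\<^sub>R d) - grad a) \<bullet> d" using z by (simp add: zero_le_mult_iff)
  then show ?thesis using z(3) by (simp add: d_def inner_diff_left)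
qed

lemma descent: "f b \<le> f a + grad a \<bullet> (b - a) + L / 2 * (norm (b - a))^2"
proof -
  define d where "d = b - a"
  define chi where "chi t = f (a + t *\<^sub>R d) - t * (grad a \<bullet> d) - L * t^2 * (norm d)^2 / 2" for t
  have "chi 1 \<le> chi 0"
  proof (rule DERIV_nonpos_imp_nonincreasing[of 0 1])
    fix t :: real assume t: "0 \<le> t" "t \<le> 1"
    have D: "(chi has_real_derivative (grad (a + t *\<^sub>R d) \<bullet> d - grad a \<bullet> d - L * t * (norm d)^2)) (at t)"
      unfolding chi_def[abs_def]
      by (rule derivative_eq_intros line_f_deriv refl | simp)+
    have "(grad (a + t *\<^sub>R d) - grad a) \<bullet> d \<le> norm (grad (a + t *\<^sub>R d) - grad a) * norm d"
      by (rule norm_cauchy_schwarz)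
    also have "\<dots> \<le> (L * norm (t *\<^sub>R d)) * norm d"
      using grad_lipschitz[of "a + t *\<^sub>R d" a] by (simp add: mult_right_mono)
    also have "\<dots> = L * t * (norm d)^2" using t by (simp add: power2_eq_square)
    finally show "\<exists>y. (chi has_real_derivative y) (at t) \<and> y \<le> 0"
      using D by (intro exI[of _ "grad (a + t *\<^sub>R d) \<bullet> d - grad a \<bullet> d - L * t * (norm d)^2"])
        (simp add: inner_diff_left)
  qed simp
  then show ?thesis by (simp add: chi_def d_def)
qed

lemma cocoercive: "(norm (grad x - grad y))^2 \<le> L * ((grad x - grad y) \<bullet> (x - y))"
proof -
  have key: "(norm (grad y - grad x))^2 / (2 * L) \<le> f y - f x - grad x \<bullet> (y - x)" for x y
  proof -
    define d where "d = grad y - grad x"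
    have A: "f x + grad x \<bullet> ((y - (1/L) *\<^sub>R d) - x) \<le> f (y - (1/L) *\<^sub>R d)" by (rule convex_lower)
    have D: "f (y - (1/L) *\<^sub>R d) \<le> f y + grad y \<bullet> ((y - (1/L) *\<^sub>R d) - y) + L / 2 * (norm ((y - (1/L) *\<^sub>R d) - y))^2"
      by (rule descent)
    have e1: "grad y \<bullet> ((y - (1/L) *\<^sub>R d) - y) = - (grad y \<bullet> d) / L" by (simp add: inner_diff_right)
    have e2: "L / 2 * (norm ((y - (1/L) *\<^sub>R d) - y))^2 = (norm d)^2 / (2 * L)"
      using L_pos by (simp add: power2_eq_square field_simps)
    have e3: "grad x \<bullet> ((y - (1/L) *\<^sub>R d) - x) = grad x \<bullet> (y - x) - (grad x \<bullet> d) / L"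
      by (simp add: inner_diff_right)
    have e4: "(grad y \<bullet> d) - (grad x \<bullet> d) = (norm d)^2"
      by (simp add: d_def inner_diff_left power2_norm_eq_inner)
    have e5: "(grad y \<bullet> d) / L - (grad x \<bullet> d) / L = (norm d)^2 / L"
      by (simp add: diff_divide_distrib[symmetric] e4)
    have "(norm d)^2 / L - (norm d)^2 / (2 * L) \<le> f y - f x - grad x \<bullet> (y - x)"
      using A D unfolding e1 e2 e3 using e5 by linarith
    moreover have "(norm d)^2 / L - (norm d)^2 / (2 * L) = (norm d)^2 / (2 * L)"
      using L_pos by (simp add: field_simps)
    ultimately show ?thesis by (simp add: d_def)
  qed
  have k1: "(norm (grad y - grad x))^2 / (2 * L) \<le> f y - f x - grad x \<bullet> (y - x)" by (rule key)
  have k2: "(norm (grad x - grad y))^2 / (2 * L) \<le> f x - f y - grad y \<bullet> (x - y)" by (rule key)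
  have n: "norm (grad y - grad x) = norm (grad x - grad y)" by (rule norm_minus_commute)
  have i: "(grad x - grad y) \<bullet> (x - y) = - (grad x \<bullet> (y - x)) - grad y \<bullet> (x - y)"
    by (simp add: inner_diff_left inner_diff_right)
  have "(norm (grad x - grad y))^2 / L \<le> (grad x - grad y) \<bullet> (x - y)"
    using k1 k2 unfolding n i by (simp add: field_simps)
  then show ?thesis using L_pos by (simp add: field_simps)
qed
end

lemma leap_identity:
  fixes z w g g' :: "'a::real_inner" and s h L c :: real
  defines "z' \<equiv> z + h *\<^sub>R w - (h^2/2) *\<^sub>R g"
    and "w' \<equiv> w - (h/2) *\<^sub>R (g + g')"
  shows "((norm (z' + (s - h) *\<^sub>R w'))^2 + h^2/4 * (s-h)^2 * (norm g')^2 + c * L * (s-h)^4 * (norm w')^2)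
       - ((norm (z + s *\<^sub>R w))^2 + h^2/4 * s^2 * (norm g)^2 + c * L * s^4 * (norm w)^2)
     = - h * (s * (g \<bullet> z) + (s - h) * (g' \<bullet> z'))
       - h * (s^2 + c * L * (s-h)^4) * (w \<bullet> g) - h * ((s-h)^2 + c * L * (s-h)^4) * (w \<bullet> g')
       + h^2 * (s-h)^2 / 2 * (g \<bullet> g' + (norm g')^2) + h^2 * (c * L * (s-h)^4) / 4 * (norm (g + g'))^2
       - (c * L * s^4 - c * L * (s-h)^4) * (norm w)^2"
  unfolding z'_def w'_def
  by (simp add: power2_norm_eq_inner inner_add_left inner_add_right inner_diff_left inner_diff_right
      inner_commute[of w z] inner_commute[of g z] inner_commute[of g' z] inner_commute[of g w] inner_commute[of g' w] inner_commute[of g' g])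
     (simp add: field_simps power2_eq_square power4_eq_xxxx; algebra)

lemma amgm: fixes a b c e :: real assumes "0 < e"
  shows "c * (a * b) \<le> e * a^2 + c^2 * b^2 / (4 * e)"
proof -
  have "e * a^2 + c^2 * b^2 / (4 * e) - c * (a * b) = (2 * e * a - c * b)^2 / (4 * e)"
    using assms by (simp add: field_simps power2_eq_square)
  moreover have "0 \<le> (2 * e * a - c * b)^2 / (4 * e)" using assms by simp
  ultimately show ?thesis by linarith
qed

lemma inner_le_amgm: fixes x y :: "'a::real_inner" assumes "0 < e" "0 \<le> c"
  shows "- c * (x \<bullet> y) \<le> e * (norm y)^2 + c^2 * (norm x)^2 / (4 * e)"
proof -
  have "- (x \<bullet> y) \<le> norm x * norm y"
    using norm_cauchy_schwarz[of "-x" y] by simp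
  then have "- c * (x \<bullet> y) \<le> c * (norm y * norm x)" using assms(2)
    by (metis mult.commute mult_left_mono mult_minus_left)
  also have "\<dots> \<le> e * (norm y)^2 + c^2 * (norm x)^2 / (4 * e)" by (rule amgm[OF assms(1)])
  finally show ?thesis .
qed

lemma inner_le_half: fixes x y :: "'a::real_inner" shows "x \<bullet> y \<le> ((norm x)^2 + (norm y)^2) / 2"
proof -
  have "0 \<le> (norm (x - y))^2" by simp
  then show ?thesis by (simp add: power2_norm_eq_inner inner_diff_left inner_diff_right inner_commute)
qed

lemma norm_add_sq_le: fixes x y :: "'a::real_inner" shows "(norm (x + y))^2 \<le> 2 * (norm x)^2 + 2 * (norm y)^2"
proof -
  have "(norm (x + y))^2 + (norm (x - y))^2 = 2 * (norm x)^2 + 2 * (norm y)^2"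
    by (simp add: power2_norm_eq_inner inner_add_left inner_add_right inner_diff_left inner_diff_right inner_commute)
  moreover have "0 \<le> (norm (x - y))^2" by simp
  ultimately show ?thesis by linarith
qed

lemma leap_step_ineq:
  fixes z w g g' z' w' :: "'a::real_inner" and s h L :: real
  assumes h: "0 < h" "h \<le> s" and Ls: "L * s^2 \<le> 1/20" and L: "L > 0"
    and cg: "(norm g)^2 \<le> L * (g \<bullet> z)" and cg': "(norm g')^2 \<le> L * (g' \<bullet> z')"
    and z': "z' = z + h *\<^sub>R w - (h^2/2) *\<^sub>R g"
    and w': "w' = w - (h/2) *\<^sub>R (g + g')"
  shows "((norm (z' + (s - h) *\<^sub>R w'))^2 + h^2/4 * (s-h)^2 * (norm g')^2 + 3/5 * L * (s-h)^4 * (norm w')^2)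
       - ((norm (z + s *\<^sub>R w))^2 + h^2/4 * s^2 * (norm g)^2 + 3/5 * L * s^4 * (norm w)^2)
     \<le> - (2/5) * h * (s * (g \<bullet> z) + (s - h) * (g' \<bullet> z'))"
proof -
  define s' where "s' = s - h"
  define P where "P = g \<bullet> z"
  define P' where "P' = g' \<bullet> z'"
  define A where "A = (norm g)^2"
  define A' where "A' = (norm g')^2"
  define B where "B = (norm w)^2"
  define \<gamma> where "\<gamma> = 3/5 * L * s^4"
  define \<gamma>' where "\<gamma>' = 3/5 * L * s'^4"
  have s'0: "0 \<le> s'" using h by (simp add: s'_def)
  have s'le: "s' \<le> s" using h by (simp add: s'_def)
  have s0: "0 < s" using h by simp
  have hs: "h = s - s'" by (simp add: s'_def)
  have A0: "0 \<le> A" "0 \<le> A'" "0 \<le> B" by (simp_all add: A_def A'_def B_def)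
  have AP: "A \<le> L * P" "A' \<le> L * P'" using cg cg' by (simp_all add: A_def P_def A'_def P'_def)
  have "0 \<le> L * P" "0 \<le> L * P'" using AP A0 by linarith+
  then have P0: "0 \<le> P" "0 \<le> P'" using L by (simp_all add: zero_le_mult_iff)
  have "s'^2 \<le> s^2" using s'le s'0 by (rule power_mono)
  then have "L * s'^2 \<le> L * s^2" using L by simp
  then have Ls': "L * s'^2 \<le> 1/20" using Ls by linarith
  have g'0: "0 \<le> \<gamma>'" using L s'0 by (simp add: \<gamma>'_def)
  have ID: "((norm (z' + (s - h) *\<^sub>R w'))^2 + h^2/4 * (s-h)^2 * (norm g')^2 + 3/5 * L * (s-h)^4 * (norm w')^2)
       - ((norm (z + s *\<^sub>R w))^2 + h^2/4 * s^2 * (norm g)^2 + 3/5 * L * s^4 * (norm w)^2)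
     = - h * (s * P + s' * P')
       - h * (s^2 + \<gamma>') * (w \<bullet> g) - h * (s'^2 + \<gamma>') * (w \<bullet> g')
       + h^2 * s'^2 / 2 * (g \<bullet> g' + A') + h^2 * \<gamma>' / 4 * (norm (g + g'))^2
       - (\<gamma> - \<gamma>') * B"
    unfolding z' w' s'_def P_def P'_def A'_def B_def \<gamma>_def \<gamma>'_def z'
    using leap_identity[of z h w g s g' L "3/5"] by (simp add: field_simps)
  have e1: "0 < h * s / (2 * L)" using h s0 L by simp
  have T1: "- (h * (s^2 + \<gamma>')) * (w \<bullet> g) \<le> h * s / (2 * L) * A + (h * (s^2 + \<gamma>'))^2 * B / (4 * (h * s / (2 * L)))"
    unfolding A_def B_def using inner_le_amgm[OF e1, of "h * (s^2 + \<gamma>')" w g] h g'0 by simp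
  have "h * s / (2 * L) * A \<le> h * s / (2 * L) * (L * P)"
    using AP(1) e1 by (intro mult_left_mono) auto
  then have T1b: "h * s / (2 * L) * A \<le> h * s * P / 2" using L by simp
  have q1: "(h * (s^2 + \<gamma>'))^2 * B / (4 * (h * s / (2 * L))) = h * L * (s^2 + \<gamma>')^2 * B / (2 * s)"
    using h s0 L by (simp add: field_simps power2_eq_square)
  have g'bound: "\<gamma>' \<le> 3/100 * s^2"
  proof -
    have "s'^4 \<le> s^4" using s'0 s'le by (intro power_mono)
    then have "s'^4 \<le> s^2 * s^2" by (simp add: power4_eq_xxxx power2_eq_square)
    then have "L * s'^4 \<le> L * s^2 * s^2" using L by (simp add: mult.assoc)
    also have "\<dots> \<le> 1/20 * s^2" using mult_right_mono[OF Ls, of "s^2"] by simp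
    finally show ?thesis unfolding \<gamma>'_def by simp
  qed
  have g'bound2: "\<gamma>' \<le> 3/100 * s'^2"
  proof -
    have "L * s'^4 = L * s'^2 * s'^2" by (simp add: power2_eq_square power4_eq_xxxx)
    also have "\<dots> \<le> 1/20 * s'^2" using mult_right_mono[OF Ls', of "s'^2"] by simp
    finally show ?thesis unfolding \<gamma>'_def by simp
  qed
  have sq1: "(s^2 + \<gamma>')^2 \<le> (103/100)^2 * s^4"
  proof -
    have "s^2 + \<gamma>' \<le> 103/100 * s^2" using g'bound by simp
    then have "(s^2 + \<gamma>')^2 \<le> (103/100 * s^2)^2" using g'0 by (intro power_mono) auto
    then show ?thesis by (simp add: power_mult_distrib power2_eq_square power4_eq_xxxx)
  qed
  have B1: "h * L * (s^2 + \<gamma>')^2 * B / (2 * s) \<le> h * L * (103/100)^2 * s^3 * B / 2"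
  proof -
    have "h * L * (s^2 + \<gamma>')^2 * B \<le> h * L * ((103/100)^2 * s^4) * B"
      using sq1 h L A0 by (intro mult_right_mono mult_left_mono) auto
    then show ?thesis using s0 by (simp add: field_simps power4_eq_xxxx power3_eq_cube)
  qed
  have T2: "- (h * (s'^2 + \<gamma>')) * (w \<bullet> g') \<le> h * s' * P' / 2 + h * L * (103/100)^2 * s'^3 * B / 2"
  proof (cases "s' = 0")
    case True then show ?thesis using h A0 L by (simp add: \<gamma>'_def)
  next
    case False
    then have s'p: "0 < s'" using s'0 by simp
    have e2: "0 < h * s' / (2 * L)" using h s'p L by simp
    have "- (h * (s'^2 + \<gamma>')) * (w \<bullet> g') \<le> h * s' / (2 * L) * A' + (h * (s'^2 + \<gamma>'))^2 * B / (4 * (h * s' / (2 * L)))"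
      unfolding A'_def B_def using inner_le_amgm[OF e2, of "h * (s'^2 + \<gamma>')" w g'] h g'0 by simp
    moreover have "h * s' / (2 * L) * A' \<le> h * s' * P' / 2"
    proof -
      have "h * s' / (2 * L) * A' \<le> h * s' / (2 * L) * (L * P')"
        using AP(2) e2 by (intro mult_left_mono) auto
      then show ?thesis using L by simp
    qed
    moreover have "(h * (s'^2 + \<gamma>'))^2 * B / (4 * (h * s' / (2 * L))) = h * L * (s'^2 + \<gamma>')^2 * B / (2 * s')"
      using h s'p L by (simp add: field_simps power2_eq_square)
    moreover have "h * L * (s'^2 + \<gamma>')^2 * B / (2 * s') \<le> h * L * (103/100)^2 * s'^3 * B / 2"
    proof -
      have "s'^2 + \<gamma>' \<le> 103/100 * s'^2" using g'bound2 by simp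
      then have "(s'^2 + \<gamma>')^2 \<le> (103/100 * s'^2)^2" using g'0 by (intro power_mono) auto
      then have "(s'^2 + \<gamma>')^2 \<le> (103/100)^2 * s'^4" by (simp add: power_mult_distrib power2_eq_square power4_eq_xxxx)
      then have "h * L * (s'^2 + \<gamma>')^2 * B \<le> h * L * ((103/100)^2 * s'^4) * B"
        using h L A0 by (intro mult_right_mono mult_left_mono) auto
      then show ?thesis using s'p by (simp add: field_simps power4_eq_xxxx power3_eq_cube)
    qed
    ultimately show ?thesis by linarith
  qed
  have Bcoef: "h * L * (103/100)^2 * s^3 * B / 2 + h * L * (103/100)^2 * s'^3 * B / 2 \<le> (\<gamma> - \<gamma>') * B"
  proof -
    have poly: "h * (s^3 + s'^3) \<le> s^4 - s'^4"
    proof -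
      have "s^4 - s'^4 - h * (s^3 + s'^3) = h * (s^2 * s' + s * s'^2)"
        unfolding hs by (simp add: algebra_simps power2_eq_square power3_eq_cube power4_eq_xxxx)
      moreover have "0 \<le> h * (s^2 * s' + s * s'^2)" using h s'0 s0 by simp
      ultimately show ?thesis by linarith
    qed
    have "h * L * (103/100)^2 * s^3 / 2 + h * L * (103/100)^2 * s'^3 / 2 \<le> 3/5 * L * (h * (s^3 + s'^3))"
    proof -
      have n: "0 \<le> L * h * s^3" "0 \<le> L * h * s'^3" using h L s0 s'0 by simp_all
      have e1: "h * L * (103/100)^2 * s^3 / 2 + h * L * (103/100)^2 * s'^3 / 2 = 10609/20000 * (L * h * s^3) + 10609/20000 * (L * h * s'^3)"
        by (simp add: power2_eq_square algebra_simps)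
      have e2: "3/5 * L * (h * (s^3 + s'^3)) = 3/5 * (L * h * s^3) + 3/5 * (L * h * s'^3)"
        by (simp add: algebra_simps)
      show ?thesis unfolding e1 e2 using n by linarith
    qed
    also have "\<dots> \<le> 3/5 * L * (s^4 - s'^4)" using poly L by simp
    also have "\<dots> = \<gamma> - \<gamma>'" by (simp add: \<gamma>_def \<gamma>'_def algebra_simps)
    finally have "(h * L * (103/100)^2 * s^3 / 2 + h * L * (103/100)^2 * s'^3 / 2) * B \<le> (\<gamma> - \<gamma>') * B"
      using A0 by (intro mult_right_mono) auto
    then show ?thesis by (simp add: algebra_simps)
  qed
  have T3: "h^2 * s'^2 / 2 * (g \<bullet> g' + A') \<le> h^2 * s'^2 / 2 * (A / 2 + 3 * A' / 2)"
  proof -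
    have "g \<bullet> g' \<le> (A + A') / 2" using inner_le_half[of g g'] by (simp add: A_def A'_def)
    then show ?thesis by (intro mult_left_mono) auto
  qed
  have T4: "h^2 * \<gamma>' / 4 * (norm (g + g'))^2 \<le> h^2 * \<gamma>' / 4 * (2 * A + 2 * A')"
    using norm_add_sq_le[of g g'] g'0 by (intro mult_left_mono) (auto simp: A_def A'_def)
  have R1: "h^2 * s'^2 / 2 * (A / 2) + h^2 * \<gamma>' / 4 * (2 * A) \<le> (1/10) * (h * s * P)"
  proof -
    have "s'^2 \<le> s^2" using s'le s'0 by (rule power_mono)
    then have a: "h * s'^2 \<le> s * s^2" using h by (intro mult_mono) auto
    have "h^2 * s'^2 / 2 * (A / 2) = h^2 * s'^2 / 4 * A" by simp
    also have "\<dots> \<le> h^2 * s'^2 / 4 * (L * P)" using AP(1) by (intro mult_left_mono) auto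
    also have "\<dots> = h * (h * s'^2) * L * P / 4" by (simp add: power2_eq_square)
    also have "\<dots> \<le> h * (s * s^2) * L * P / 4" using a h L P0 by (simp add: mult_left_mono mult_right_mono)
    also have "\<dots> = h * s * P * (L * s^2) / 4" by simp
    also have "\<dots> \<le> h * s * P * (1/20) / 4" using Ls h s0 P0 by (intro divide_right_mono mult_left_mono) auto
    finally have x1: "h^2 * s'^2 / 2 * (A / 2) \<le> h * s * P / 80" by simp
    have "h^2 * \<gamma>' / 4 * (2 * A) = h^2 * \<gamma>' / 2 * A" by simp
    also have "\<dots> \<le> h^2 * \<gamma>' / 2 * (L * P)" using AP(1) g'0 by (intro mult_left_mono) auto
    also have "\<dots> \<le> h^2 * (3/100 * s^2) / 2 * (L * P)" using g'bound L P0 by (intro mult_right_mono divide_right_mono mult_left_mono) auto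
    also have "\<dots> = h * s * P * (3/200) * (h / s * (L * s^2))" using s0 by (simp add: field_simps power2_eq_square)
    also have "\<dots> \<le> h * s * P * (3/200) * (1 * (1/20))" using h s0 Ls P0 L
      by (intro mult_left_mono mult_mono) (auto simp: divide_le_eq)
    finally have x2: "h^2 * \<gamma>' / 4 * (2 * A) \<le> h * s * P * (3/4000)" by simp
    have "0 \<le> h * s * P" using h s0 P0 by simp
    then show ?thesis using x1 x2 by linarith
  qed
  have R2: "h^2 * s'^2 / 2 * (3 * A' / 2) + h^2 * \<gamma>' / 4 * (2 * A') \<le> (1/10) * (h * s' * P')"
  proof -
    have a: "h * s' \<le> s^2" using h s'0 s'le unfolding power2_eq_square by (intro mult_mono) auto
    have "h^2 * s'^2 / 2 * (3 * A' / 2) = 3 * h^2 * s'^2 / 4 * A'" by simp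
    also have "\<dots> \<le> 3 * h^2 * s'^2 / 4 * (L * P')" using AP(2) by (intro mult_left_mono) auto
    also have "\<dots> = 3 / 4 * h * s' * P' * (L * (h * s'))" by (simp add: power2_eq_square)
    also have "\<dots> \<le> 3 / 4 * h * s' * P' * (L * s^2)" using a h s'0 L P0 by (intro mult_left_mono) auto
    also have "\<dots> \<le> 3 / 4 * h * s' * P' * (1/20)" using Ls h s'0 P0 by (intro mult_left_mono) auto
    finally have x1: "h^2 * s'^2 / 2 * (3 * A' / 2) \<le> 3/80 * h * s' * P'" by simp
    have "h^2 * \<gamma>' / 4 * (2 * A') = h^2 * \<gamma>' / 2 * A'" by simp
    also have "\<dots> \<le> h^2 * \<gamma>' / 2 * (L * P')" using AP(2) g'0 by (intro mult_left_mono) auto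
    also have "\<dots> = 3/10 * h * s' * P' * ((L * s'^2) * (L * (h * s')))" by (simp add: \<gamma>'_def power2_eq_square power4_eq_xxxx)
    also have "\<dots> \<le> 3/10 * h * s' * P' * ((1/20) * (1/20))"
    proof -
      have "L * (h * s') \<le> L * s^2" using a L by simp
      then have "L * (h * s') \<le> 1/20" using Ls by linarith
      moreover have "0 \<le> L * (h * s')" using L h s'0 by simp
      ultimately have "(L * s'^2) * (L * (h * s')) \<le> (1/20) * (1/20)" using Ls' L s'0
        by (intro mult_mono) auto
      then show ?thesis using h s'0 P0 by (intro mult_left_mono) auto
    qed
    finally have x2: "h^2 * \<gamma>' / 4 * (2 * A') \<le> 3/4000 * h * s' * P'" by simp
    have "0 \<le> h * s' * P'" using h s'0 P0 by simp
    then show ?thesis using x1 x2 by linarith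
  qed
  have F1: "- h * (s^2 + \<gamma>') * (w \<bullet> g) \<le> h * s * P / 2 + h * L * (103/100)^2 * s^3 * B / 2"
  proof -
    have "- h * (s^2 + \<gamma>') * (w \<bullet> g) = - (h * (s^2 + \<gamma>')) * (w \<bullet> g)" by simp
    then show ?thesis using T1 T1b q1 B1 by linarith
  qed
  have F2: "- h * (s'^2 + \<gamma>') * (w \<bullet> g') \<le> h * s' * P' / 2 + h * L * (103/100)^2 * s'^3 * B / 2"
  proof -
    have "- h * (s'^2 + \<gamma>') * (w \<bullet> g') = - (h * (s'^2 + \<gamma>')) * (w \<bullet> g')" by simp
    then show ?thesis using T2 by linarith
  qed
  have T3': "h^2 * s'^2 / 2 * (g \<bullet> g' + A') \<le> h^2 * s'^2 / 2 * (A / 2) + h^2 * s'^2 / 2 * (3 * A' / 2)"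
    using T3 distrib_left[of "h^2 * s'^2 / 2" "A / 2" "3 * A' / 2"] by linarith
  have T4': "h^2 * \<gamma>' / 4 * (norm (g + g'))^2 \<le> h^2 * \<gamma>' / 4 * (2 * A) + h^2 * \<gamma>' / 4 * (2 * A')"
    using T4 distrib_left[of "h^2 * \<gamma>' / 4" "2 * A" "2 * A'"] by linarith
  have d1: "h * (s * P + s' * P') = h * s * P + h * s' * P'" by (simp add: algebra_simps)
  have d2: "(2/5) * h * (s * P + s' * P') = (2/5) * (h * s * P) + (2/5) * (h * s' * P')" by (simp add: algebra_simps)
  have d3: "(\<gamma> - \<gamma>') * B = \<gamma> * B - \<gamma>' * B" by (simp add: algebra_simps)
  have "- h * (s * P + s' * P')
       - h * (s^2 + \<gamma>') * (w \<bullet> g) - h * (s'^2 + \<gamma>') * (w \<bullet> g')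
       + h^2 * s'^2 / 2 * (g \<bullet> g' + A') + h^2 * \<gamma>' / 4 * (norm (g + g'))^2
       - (\<gamma> - \<gamma>') * B \<le> - (2/5) * h * (s * P + s' * P')"
  proof -
    have m: "- h * (s * P + s' * P') = - (h * (s * P + s' * P'))" "- (2/5) * h * (s * P + s' * P') = - ((2/5) * h * (s * P + s' * P'))" by simp_all
    show ?thesis unfolding m d1 d2 using F1 F2 T3' T4' R1 R2 Bcoef d3 by linarith
  qed
  then show ?thesis unfolding ID by (simp add: s'_def P_def P'_def)
qed

lemma sum_odd_sq: "(\<Sum>j<N. real (N - j) + real (N - Suc j)) = (real N)^2"
proof (induction N)
  case 0 then show ?case by simp
next
  case (Suc N)
  have "(\<Sum>j<Suc N. real (Suc N - j) + real (Suc N - Suc j))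
      = (real (Suc N) + real N) + (\<Sum>j<N. real (Suc N - Suc j) + real (Suc N - Suc (Suc j)))"
    by (subst sum.lessThan_Suc_shift) simp
  also have "(\<Sum>j<N. real (Suc N - Suc j) + real (Suc N - Suc (Suc j))) = (\<Sum>j<N. real (N - j) + real (N - Suc j))"
    by simp
  finally show ?case using Suc by (simp add: power2_eq_square algebra_simps)
qed

lemma norm_le_of_coc: fixes g z :: "'a::real_inner"
  assumes "(norm g)^2 \<le> L * (g \<bullet> z)" "0 < L"
  shows "norm g \<le> L * norm z"
proof (cases "norm g = 0")
  case True then show ?thesis using assms by simp
next
  case False
  have "(norm g)^2 \<le> L * (norm g * norm z)"
  proof -
    have "L * (g \<bullet> z) \<le> L * (norm g * norm z)" using norm_cauchy_schwarz[of g z] assms(2) by (intro mult_left_mono) auto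
    then show ?thesis using assms(1) by linarith
  qed
  then have "norm g * norm g \<le> norm g * (L * norm z)" by (simp add: power2_eq_square algebra_simps)
  then show ?thesis using False by (simp add: mult_le_cancel_left)
qed

lemma leap_contract_seq:
  fixes z w g :: "nat \<Rightarrow> 'a::real_inner"
  assumes rz: "\<And>j. z (Suc j) = z j + h *\<^sub>R w j - (h^2/2) *\<^sub>R g j"
    and rw: "\<And>j. w (Suc j) = w j - (h/2) *\<^sub>R (g j + g (Suc j))"
    and w0: "w 0 = 0"
    and coc: "\<And>j. (norm (g j))^2 \<le> L * (g j \<bullet> z j)"
    and sm: "\<And>j. \<alpha> * (norm (z j))^2 \<le> g j \<bullet> z j"
    and h: "0 < h" and NT: "real N * h = T" and LT: "L * T^2 \<le> 1/20" and \<alpha>: "0 < \<alpha>" and L: "0 < L"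
  shows "(norm (z N))^2 \<le> (1 - \<alpha> * T^2 / 5) * (norm (z 0))^2"
proof (cases "N = 0")
  case True
  then have "T = 0" using NT by simp
  then show ?thesis using True by simp
next
  case False
  then have N1: "1 \<le> N" by simp
  have T0: "0 < T" using NT h N1 by (metis mult_pos_pos of_nat_0_less_iff False neq0_conv)
  have "1 \<le> real N" using N1 by simp
  then have "1 * h \<le> real N * h" using h by (intro mult_right_mono) auto
  then have hT: "h \<le> T" using NT by simp
  have glip: "norm (g j) \<le> L * norm (z j)" for j using norm_le_of_coc[OF coc L] .
  define M where "M = Max ((\<lambda>j. norm (z j)) ` {..N})"
  have Mge: "norm (z j) \<le> M" if "j \<le> N" for j unfolding M_def using that by (intro Max_ge) auto
  obtain k where k: "k \<le> N" "M = norm (z k)"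
  proof -
    have "M \<in> (\<lambda>j. norm (z j)) ` {..N}" unfolding M_def by (intro Max_in) auto
    then show ?thesis using that by auto
  qed
  have gM: "norm (g j) \<le> L * M" if "j \<le> N" for j
  proof -
    have "L * norm (z j) \<le> L * M" using Mge[OF that] L by (intro mult_left_mono) auto
    then show ?thesis using glip[of j] by linarith
  qed
  have M0: "0 \<le> M" using Mge[of 0] norm_ge_zero[of "z 0"] by linarith
  have a1: "j \<le> N \<Longrightarrow> norm (w j) \<le> real j * h * L * M" for j
  proof (induction j)
    case 0 then show ?case using w0 by simp
  next
    case (Suc j)
    have "norm (w (Suc j)) \<le> norm (w j) + (h/2) * (norm (g j) + norm (g (Suc j)))"
    proof -
      have "norm (w (Suc j)) \<le> norm (w j) + norm ((h/2) *\<^sub>R (g j + g (Suc j)))"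
        unfolding rw by (rule norm_triangle_ineq4)
      also have "norm ((h/2) *\<^sub>R (g j + g (Suc j))) = (h/2) * norm (g j + g (Suc j))" using h by simp
      also have "\<dots> \<le> (h/2) * (norm (g j) + norm (g (Suc j)))"
        using h norm_triangle_ineq[of "g j" "g (Suc j)"] by (intro mult_left_mono) auto
      finally show ?thesis by simp
    qed
    also have "\<dots> \<le> real j * h * L * M + (h/2) * (L * M + L * M)"
    proof -
      have "norm (g j) \<le> L * M" using gM Suc.prems by simp
      moreover have "norm (g (Suc j)) \<le> L * M" using gM Suc.prems by simp
      ultimately have "(h/2) * (norm (g j) + norm (g (Suc j))) \<le> (h/2) * (L * M + L * M)"
        using h by (intro mult_left_mono) auto
      then show ?thesis using Suc.IH Suc.prems by simp
    qed
    also have "\<dots> = real (Suc j) * h * L * M" by (simp add: algebra_simps)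
    finally show ?case .
  qed
  have a2: "j \<le> N \<Longrightarrow> norm (z j - z 0) \<le> real j * h * (3/2 * T * L * M)" for j
  proof (induction j)
    case 0 then show ?case by simp
  next
    case (Suc j)
    have jN: "j \<le> N" using Suc.prems by simp
    have jh: "real j * h \<le> T" using NT jN h by (metis mult_right_mono of_nat_mono less_imp_le)
    have "norm (z (Suc j) - z 0) \<le> norm (z j - z 0) + h * norm (w j) + (h^2/2) * norm (g j)"
    proof -
      have "z (Suc j) - z 0 = (z j - z 0) + h *\<^sub>R w j - (h^2/2) *\<^sub>R g j" unfolding rz by simp
      then have "norm (z (Suc j) - z 0) \<le> norm ((z j - z 0) + h *\<^sub>R w j) + norm ((h^2/2) *\<^sub>R g j)"
        by (metis norm_triangle_ineq4)
      also have "\<dots> \<le> norm (z j - z 0) + norm (h *\<^sub>R w j) + norm ((h^2/2) *\<^sub>R g j)"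
        using norm_triangle_ineq[of "z j - z 0" "h *\<^sub>R w j"] by simp
      finally show ?thesis using h by simp
    qed
    also have "\<dots> \<le> real j * h * (3/2 * T * L * M) + h * (T * L * M) + (h^2/2) * (L * M)"
    proof -
      have "norm (w j) \<le> T * L * M"
      proof -
        have "real j * h * (L * M) \<le> T * (L * M)" using jh L M0 by (intro mult_right_mono) auto
        then show ?thesis using a1[OF jN] by (simp add: mult.assoc)
      qed
      then have i1: "h * norm (w j) \<le> h * (T * L * M)" using h by simp
      have "norm (g j) \<le> L * M" using gM[OF jN] .
      then have i2: "(h^2/2) * norm (g j) \<le> (h^2/2) * (L * M)" by (simp add: mult_left_mono)
      show ?thesis using Suc.IH[OF jN] i1 i2 by linarith
    qed
    also have "\<dots> \<le> real (Suc j) * h * (3/2 * T * L * M)"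
    proof -
      have "(h^2/2) * (L * M) \<le> h * (1/2 * T * L * M)"
        using hT h L M0 by (simp add: power2_eq_square mult_right_mono mult_left_mono mult.assoc)
      then show ?thesis by (simp add: algebra_simps)
    qed
    finally show ?case .
  qed
  have dz: "norm (z j - z 0) \<le> 3/40 * M" if "j \<le> N" for j
  proof -
    have "real j * h \<le> T" using NT that h by (metis mult_right_mono of_nat_mono less_imp_le)
    then have "norm (z j - z 0) \<le> T * (3/2 * T * L * M)"
    proof -
      have "real j * h * (3/2 * T * L * M) \<le> T * (3/2 * T * L * M)" using \<open>real j * h \<le> T\<close> L M0 T0 by (intro mult_right_mono) auto
      then show ?thesis using a2[OF that] by linarith
    qed
    also have "\<dots> = 3/2 * (L * T^2) * M" by (simp add: power2_eq_square algebra_simps)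
    also have "\<dots> \<le> 3/2 * (1/20) * M" using LT M0 by (intro mult_right_mono) auto
    finally show ?thesis by simp
  qed
  have Mb: "M \<le> 40/37 * norm (z 0)"
  proof -
    have "norm (z k) \<le> norm (z 0) + norm (z k - z 0)" by (metis norm_triangle_sub add.commute)
    then show ?thesis using dz[OF k(1)] k(2) by linarith
  qed
  have zlow: "4/5 * (norm (z 0))^2 \<le> (norm (z j))^2" if "j \<le> N" for j
  proof -
    have "norm (z 0) \<le> norm (z j) + norm (z j - z 0)" by (metis norm_triangle_sub norm_minus_commute add.commute)
    then have "34/37 * norm (z 0) \<le> norm (z j)" using dz[OF that] Mb by linarith
    moreover have "0 \<le> 34/37 * norm (z 0)" by simp
    ultimately have "(34/37 * norm (z 0))^2 \<le> (norm (z j))^2" by (rule power_mono)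
    moreover have "(34/37 * norm (z 0))^2 = 1156/1369 * (norm (z 0))^2" by (simp add: power_mult_distrib power2_eq_square)
    moreover have "4/5 * (norm (z 0))^2 \<le> 1156/1369 * (norm (z 0))^2" by (intro mult_right_mono) auto
    ultimately show ?thesis by linarith
  qed
  define p where "p j = g j \<bullet> z j" for j
  have p0: "0 \<le> p j" for j using coc[of j] L unfolding p_def
    by (metis zero_le_power2 order_trans zero_le_mult_iff not_le)
  have plow: "\<alpha> * (4/5 * (norm (z 0))^2) \<le> p j" if "j \<le> N" for j
  proof -
    have "\<alpha> * (4/5 * (norm (z 0))^2) \<le> \<alpha> * (norm (z j))^2" using zlow[OF that] \<alpha> by (intro mult_left_mono) auto
    then show ?thesis using sm[of j] unfolding p_def by linarith
  qed
  define s where "s j = real (N - j) * h" for j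
  define V where "V j = (norm (z j + s j *\<^sub>R w j))^2 + h^2/4 * (s j)^2 * (norm (g j))^2 + 3/5 * L * (s j)^4 * (norm (w j))^2" for j
  have step: "V (Suc j) - V j \<le> - (2/5) * h * (s j * p j + s (Suc j) * p (Suc j))" if "j < N" for j
  proof -
    have sS: "s (Suc j) = s j - h" unfolding s_def using that by (simp add: of_nat_diff algebra_simps)
    have hs: "h \<le> s j" unfolding s_def using that h by simp
    have sT: "s j \<le> T" unfolding s_def using NT h by (metis diff_le_self mult_right_mono of_nat_mono less_imp_le)
    have "L * (s j)^2 \<le> L * T^2" using sT hs h L by (intro mult_left_mono power_mono) auto
    then have Ls: "L * (s j)^2 \<le> 1/20" using LT by linarith
    show ?thesis
      using leap_step_ineq[OF h hs Ls L coc[of j] coc[of "Suc j"] rz[of j] rw[of j]]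
      unfolding V_def sS p_def .
  qed
  define S where "S = (\<Sum>j<N. h * (s j * p j + s (Suc j) * p (Suc j)))"
  have terms0: "0 \<le> h * (s j * p j + s (Suc j) * p (Suc j))" for j
    using h p0 by (simp add: s_def)
  have "V N - V 0 = (\<Sum>j<N. V (Suc j) - V j)" by (simp add: sum_lessThan_telescope)
  also have "\<dots> \<le> (\<Sum>j<N. - (2/5) * (h * (s j * p j + s (Suc j) * p (Suc j))))"
    using step by (intro sum_mono) (simp add: mult.assoc)
  also have "\<dots> = - (2/5) * S" unfolding S_def by (simp add: sum_distrib_left)
  finally have VS: "V N - V 0 \<le> - (2/5) * S" .
  have VN: "V N = (norm (z N))^2" unfolding V_def s_def by simp
  have s0: "s 0 = T" unfolding s_def using NT by simp
  have V0: "V 0 = (norm (z 0))^2 + h^2/4 * T^2 * (norm (g 0))^2" unfolding V_def s0 using w0 by simp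
  have Sfirst: "h * T * p 0 \<le> S"
  proof -
    have "h * (s 0 * p 0 + s (Suc 0) * p (Suc 0)) \<le> S"
      unfolding S_def using terms0 False by (intro member_le_sum) auto
    moreover have "0 \<le> h * (s (Suc 0) * p (Suc 0))" using h p0 by (simp add: s_def)
    ultimately show ?thesis unfolding s0 by (simp add: algebra_simps)
  qed
  have extra: "h^2/4 * T^2 * (norm (g 0))^2 \<le> 1/80 * S"
  proof -
    have "h^2/4 * T^2 * (norm (g 0))^2 \<le> h^2/4 * T^2 * (L * p 0)"
      using coc[of 0] unfolding p_def by (intro mult_left_mono) auto
    also have "\<dots> = (h * T * p 0) * (h * T * L) / 4" by (simp add: power2_eq_square)
    also have "\<dots> \<le> (h * T * p 0) * (1/20) / 4"
    proof -
      have "h * T * L \<le> T * T * L" using hT T0 L by (simp add: mult_right_mono)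
      then have "h * T * L \<le> 1/20" using LT by (simp add: power2_eq_square algebra_simps)
      moreover have "0 \<le> h * T * p 0" using h T0 p0 by simp
      ultimately show ?thesis by (intro divide_right_mono mult_left_mono) auto
    qed
    finally show ?thesis using Sfirst by linarith
  qed
  have Slow: "\<alpha> * (4/5 * (norm (z 0))^2) * T^2 \<le> S"
  proof -
    have "(\<Sum>j<N. h * (s j * (\<alpha> * (4/5 * (norm (z 0))^2)) + s (Suc j) * (\<alpha> * (4/5 * (norm (z 0))^2)))) \<le> S"
      unfolding S_def
    proof (intro sum_mono)
      fix j assume "j \<in> {..<N}"
      then have j: "j \<le> N" "Suc j \<le> N" by auto
      have "s j * (\<alpha> * (4/5 * (norm (z 0))^2)) \<le> s j * p j" using plow[OF j(1)] h by (intro mult_left_mono) (auto simp: s_def)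
      moreover have "s (Suc j) * (\<alpha> * (4/5 * (norm (z 0))^2)) \<le> s (Suc j) * p (Suc j)" using plow[OF j(2)] h by (intro mult_left_mono) (auto simp: s_def)
      ultimately show "h * (s j * (\<alpha> * (4/5 * (norm (z 0))^2)) + s (Suc j) * (\<alpha> * (4/5 * (norm (z 0))^2))) \<le> h * (s j * p j + s (Suc j) * p (Suc j))"
        using h by (intro mult_left_mono) auto
    qed
    moreover have "(\<Sum>j<N. h * (s j * (\<alpha> * (4/5 * (norm (z 0))^2)) + s (Suc j) * (\<alpha> * (4/5 * (norm (z 0))^2))))
        = \<alpha> * (4/5 * (norm (z 0))^2) * (h^2 * (\<Sum>j<N. real (N - j) + real (N - Suc j)))"
    proof -
      define K where "K = \<alpha> * (4/5 * (norm (z 0))^2)"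
      have "h * (s j * K + s (Suc j) * K) = K * h^2 * (real (N - j) + real (N - Suc j))" for j
        by (simp add: s_def algebra_simps power2_eq_square)
      then have "(\<Sum>j<N. h * (s j * K + s (Suc j) * K)) = (\<Sum>j<N. K * h^2 * (real (N - j) + real (N - Suc j)))"
        by simp
      also have "\<dots> = K * (h^2 * (\<Sum>j<N. real (N - j) + real (N - Suc j)))"
        by (simp add: sum_distrib_left mult.assoc)
      finally show ?thesis unfolding K_def .
    qed
    moreover have "h^2 * (\<Sum>j<N. real (N - j) + real (N - Suc j)) = T^2"
      unfolding sum_odd_sq using NT[symmetric] by (simp add: power_mult_distrib mult.commute)
    ultimately show ?thesis by simp
  qed
  have "(norm (z N))^2 \<le> (norm (z 0))^2 - 31/80 * S"
    using VS VN V0 extra by linarith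
  also have "\<dots> \<le> (norm (z 0))^2 - 31/80 * (\<alpha> * (4/5 * (norm (z 0))^2) * T^2)"
    using Slow by linarith
  also have "\<dots> \<le> (1 - \<alpha> * T^2 / 5) * (norm (z 0))^2"
  proof -
    have "0 \<le> \<alpha> * T^2 * (norm (z 0))^2" using \<alpha> by simp
    then show ?thesis by (simp add: algebra_simps)
  qed
  finally show ?thesis .
qed

lemma sq_contract:
  fixes a b e :: real
  assumes "a^2 \<le> (1 - e/5) * b^2" "0 \<le> e" "e \<le> 10" "0 \<le> b"
  shows "a \<le> (1 - e/10) * b"
proof -
  have "(1 - e/5) * b^2 \<le> ((1 - e/10) * b)^2"
  proof -
    have "((1 - e/10) * b)^2 - (1 - e/5) * b^2 = (e/10)^2 * b^2" by (simp add: power2_eq_square algebra_simps)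
    then show ?thesis by (smt (verit) zero_le_power2 mult_nonneg_nonneg)
  qed
  then have "a^2 \<le> ((1 - e/10) * b)^2" using assms(1) by linarith
  moreover have "0 \<le> (1 - e/10) * b" using assms by simp
  ultimately show ?thesis by (rule power2_le_imp_le)
qed

context hmc_pot
begin

lemma leap_contract:
  assumes h: "0 < h" and NT: "real N * h = T" and LT: "L * T^2 \<le> 1/20"
  shows "norm (fst ((leap_step grad h ^^ N) (x, v)) - fst ((leap_step grad h ^^ N) (y, v)))
         \<le> (1 - \<alpha> * T^2 / 10) * norm (x - y)"
proof -
  define X where "X j = (leap_step grad h ^^ j) (x, v)" for j
  define Y where "Y j = (leap_step grad h ^^ j) (y, v)" for j
  have XS: "fst (X (Suc j)) = fst (X j) + h *\<^sub>R snd (X j) - (h^2/2) *\<^sub>R grad (fst (X j))"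
       "snd (X (Suc j)) = snd (X j) - (h/2) *\<^sub>R (grad (fst (X j)) + grad (fst (X (Suc j))))" for j
    unfolding X_def by (simp_all add: leap_step_def Let_def)
  have YS: "fst (Y (Suc j)) = fst (Y j) + h *\<^sub>R snd (Y j) - (h^2/2) *\<^sub>R grad (fst (Y j))"
       "snd (Y (Suc j)) = snd (Y j) - (h/2) *\<^sub>R (grad (fst (Y j)) + grad (fst (Y (Suc j))))" for j
    unfolding Y_def by (simp_all add: leap_step_def Let_def)
  define z where "z j = fst (X j) - fst (Y j)" for j
  define w where "w j = snd (X j) - snd (Y j)" for j
  define g where "g j = grad (fst (X j)) - grad (fst (Y j))" for j
  have rz: "z (Suc j) = z j + h *\<^sub>R w j - (h^2/2) *\<^sub>R g j" for j
    unfolding z_def w_def g_def XS YS by (simp add: algebra_simps)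
  have rw: "w (Suc j) = w j - (h/2) *\<^sub>R (g j + g (Suc j))" for j
    unfolding w_def g_def XS(2) YS(2) by (simp add: algebra_simps)
  have w0: "w 0 = 0" unfolding w_def X_def Y_def by simp
  have coc: "(norm (g j))^2 \<le> L * (g j \<bullet> z j)" for j unfolding g_def z_def by (rule cocoercive)
  have sm: "\<alpha> * (norm (z j))^2 \<le> g j \<bullet> z j" for j unfolding g_def z_def by (rule strong_mono)
  have main: "(norm (z N))^2 \<le> (1 - \<alpha> * T^2 / 5) * (norm (z 0))^2"
    by (rule leap_contract_seq[OF rz rw w0 coc sm h NT LT alpha_pos L_pos])
  have e: "0 \<le> \<alpha> * T^2" "\<alpha> * T^2 \<le> 10"
  proof -
    show "0 \<le> \<alpha> * T^2" using alpha_pos by simp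
    have "\<alpha> * T^2 \<le> L * T^2" using alpha_le_L by (intro mult_right_mono) auto
    then show "\<alpha> * T^2 \<le> 10" using LT by linarith
  qed
  have "norm (z N) \<le> (1 - \<alpha> * T^2 / 10) * norm (z 0)"
    using sq_contract[of "norm (z N)" "\<alpha> * T^2" "norm (z 0)"] main e by simp
  then show ?thesis unfolding z_def X_def Y_def by simp
qed

end

lemma vd_norm_sq:
  fixes d :: "real \<Rightarrow> 'b::real_inner"
  assumes "(d has_vector_derivative D) (at t within S)"
  shows "((\<lambda>s. (norm (d s))^2) has_real_derivative 2 * (d t \<bullet> D)) (at t within S)"
proof -
  have dd: "(d has_derivative (\<lambda>h. h *\<^sub>R D)) (at t within S)" using assms by (simp add: has_vector_derivative_def)
  have "((\<lambda>s. d s \<bullet> d s) has_derivative (\<lambda>h. d t \<bullet> (h *\<^sub>R D) + (h *\<^sub>R D) \<bullet> d t)) (at t within S)"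
    by (rule has_derivative_inner[OF dd dd])
  moreover have "(\<lambda>h. d t \<bullet> (h *\<^sub>R D) + (h *\<^sub>R D) \<bullet> d t) = (\<lambda>h. h * (2 * (d t \<bullet> D)))"
    by (auto simp: fun_eq_iff inner_commute algebra_simps)
  moreover have "(\<lambda>h. h * (2 * (d t \<bullet> D))) = (*) (2 * (d t \<bullet> D))" by (auto simp: fun_eq_iff)
  ultimately show ?thesis by (simp add: has_field_derivative_def power2_norm_eq_inner)
qed

lemma lip_inner:
  fixes F :: "'b::real_inner \<Rightarrow> 'b"
  assumes lip: "\<And>a b. norm (F a - F b) \<le> K * norm (a - b)"
  shows "\<bar>(a - b) \<bullet> (F a - F b)\<bar> \<le> K * (norm (a - b))^2"
proof -
  have "\<bar>(a - b) \<bullet> (F a - F b)\<bar> \<le> norm (a - b) * norm (F a - F b)" by (rule Cauchy_Schwarz_ineq2)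
  also have "\<dots> \<le> norm (a - b) * (K * norm (a - b))" using lip by (intro mult_left_mono) auto
  finally show ?thesis by (simp add: power2_eq_square algebra_simps)
qed

lemma gronwall_fwd:
  fixes y1 y2 :: "real \<Rightarrow> 'b::real_inner"
  assumes d1: "\<And>t. (y1 has_vector_derivative F (y1 t)) (at t)"
    and d2: "\<And>t. (y2 has_vector_derivative F (y2 t)) (at t)"
    and lip: "\<And>a b. norm (F a - F b) \<le> K * norm (a - b)" and t: "0 \<le> t"
  shows "(norm (y1 t - y2 t))^2 \<le> exp (2 * K * t) * (norm (y1 0 - y2 0))^2"
proof -
  define \<phi> where "\<phi> s = exp (- (2 * K * s)) * (norm (y1 s - y2 s))^2" for s
  have "\<phi> t \<le> \<phi> 0"
  proof (rule DERIV_nonpos_imp_nonincreasing[OF t])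
    fix s :: real
    have dd: "((\<lambda>s. y1 s - y2 s) has_vector_derivative (F (y1 s) - F (y2 s))) (at s)"
      using d1 d2 by (rule derivative_intros)
    have D: "(\<phi> has_real_derivative (exp (- (2 * K * s)) * (- (2 * K)) * (norm (y1 s - y2 s))^2
                + exp (- (2 * K * s)) * (2 * ((y1 s - y2 s) \<bullet> (F (y1 s) - F (y2 s)))))) (at s)"
      unfolding \<phi>_def[abs_def]
      by (rule derivative_eq_intros vd_norm_sq[OF dd] refl | simp)+
    have "(y1 s - y2 s) \<bullet> (F (y1 s) - F (y2 s)) \<le> K * (norm (y1 s - y2 s))^2"
      using lip_inner[OF lip, of "y1 s" "y2 s"] by linarith
    then have "exp (- (2 * K * s)) * (2 * ((y1 s - y2 s) \<bullet> (F (y1 s) - F (y2 s)))) \<le> exp (- (2 * K * s)) * (2 * (K * (norm (y1 s - y2 s))^2))"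
      by (intro mult_left_mono) auto
    moreover have "exp (- (2 * K * s)) * (- (2 * K)) * (norm (y1 s - y2 s))^2 = - (exp (- (2 * K * s)) * (2 * (K * (norm (y1 s - y2 s))^2)))"
      by (simp add: algebra_simps)
    ultimately have "exp (- (2 * K * s)) * (- (2 * K)) * (norm (y1 s - y2 s))^2
                + exp (- (2 * K * s)) * (2 * ((y1 s - y2 s) \<bullet> (F (y1 s) - F (y2 s)))) \<le> 0"
      by linarith
    then show "\<exists>y. (\<phi> has_real_derivative y) (at s) \<and> y \<le> 0" using D by blast
  qed
  then have "exp (- (2 * K * t)) * (norm (y1 t - y2 t))^2 \<le> (norm (y1 0 - y2 0))^2" by (simp add: \<phi>_def)
  then have "exp (2 * K * t) * (exp (- (2 * K * t)) * (norm (y1 t - y2 t))^2) \<le> exp (2 * K * t) * (norm (y1 0 - y2 0))^2"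
    by (intro mult_left_mono) auto
  then show ?thesis by (simp add: exp_minus mult.assoc[symmetric])
qed

lemma gronwall_bwd:
  fixes y1 y2 :: "real \<Rightarrow> 'b::real_inner"
  assumes d1: "\<And>t. (y1 has_vector_derivative F (y1 t)) (at t)"
    and d2: "\<And>t. (y2 has_vector_derivative F (y2 t)) (at t)"
    and lip: "\<And>a b. norm (F a - F b) \<le> K * norm (a - b)" and t: "t \<le> 0"
  shows "(norm (y1 t - y2 t))^2 \<le> exp (- (2 * K * t)) * (norm (y1 0 - y2 0))^2"
proof -
  define \<phi> where "\<phi> s = exp (2 * K * s) * (norm (y1 s - y2 s))^2" for s
  have "\<phi> t \<le> \<phi> 0"
  proof (rule DERIV_nonneg_imp_nondecreasing[OF t])
    fix s :: real
    have dd: "((\<lambda>s. y1 s - y2 s) has_vector_derivative (F (y1 s) - F (y2 s))) (at s)"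
      using d1 d2 by (rule derivative_intros)
    have D: "(\<phi> has_real_derivative (exp (2 * K * s) * (2 * K) * (norm (y1 s - y2 s))^2
                + exp (2 * K * s) * (2 * ((y1 s - y2 s) \<bullet> (F (y1 s) - F (y2 s)))))) (at s)"
      unfolding \<phi>_def[abs_def]
      by (rule derivative_eq_intros vd_norm_sq[OF dd] refl | simp)+
    have "- (K * (norm (y1 s - y2 s))^2) \<le> (y1 s - y2 s) \<bullet> (F (y1 s) - F (y2 s))"
      using lip_inner[OF lip, of "y1 s" "y2 s"] by linarith
    then have "exp (2 * K * s) * (2 * (- (K * (norm (y1 s - y2 s))^2))) \<le> exp (2 * K * s) * (2 * ((y1 s - y2 s) \<bullet> (F (y1 s) - F (y2 s))))"
      by (intro mult_left_mono) auto
    moreover have "exp (2 * K * s) * (2 * K) * (norm (y1 s - y2 s))^2 = - (exp (2 * K * s) * (2 * (- (K * (norm (y1 s - y2 s))^2))))"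
      by (simp add: algebra_simps)
    ultimately have "0 \<le> exp (2 * K * s) * (2 * K) * (norm (y1 s - y2 s))^2
                + exp (2 * K * s) * (2 * ((y1 s - y2 s) \<bullet> (F (y1 s) - F (y2 s))))"
      by linarith
    then show "\<exists>y. (\<phi> has_real_derivative y) (at s) \<and> 0 \<le> y" using D by blast
  qed
  then have "exp (2 * K * t) * (norm (y1 t - y2 t))^2 \<le> (norm (y1 0 - y2 0))^2" by (simp add: \<phi>_def)
  then have "exp (- (2 * K * t)) * (exp (2 * K * t) * (norm (y1 t - y2 t))^2) \<le> exp (- (2 * K * t)) * (norm (y1 0 - y2 0))^2"
    by (intro mult_left_mono) auto
  then show ?thesis by (simp add: exp_minus mult.assoc[symmetric])
qed

lemma ode_unique:
  fixes y1 y2 :: "real \<Rightarrow> 'b::real_inner"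
  assumes d1: "\<And>t. (y1 has_vector_derivative F (y1 t)) (at t)"
    and d2: "\<And>t. (y2 has_vector_derivative F (y2 t)) (at t)"
    and lip: "\<And>a b. norm (F a - F b) \<le> K * norm (a - b)" and eq: "y1 0 = y2 0"
  shows "y1 = y2"
proof
  fix t :: real
  have "(norm (y1 t - y2 t))^2 \<le> 0"
  proof (cases "0 \<le> t")
    case True then show ?thesis using gronwall_fwd[OF d1 d2 lip True] eq by simp
  next
    case False then show ?thesis using gronwall_bwd[OF d1 d2 lip, of t] eq by simp
  qed
  then show "y1 t = y2 t" by simp
qed

lemma integral_poly:
  fixes t c :: real assumes t: "0 \<le> t"
  shows "integral {0..t} (\<lambda>s. c * s^k) = c * t^(Suc k) / real (Suc k)"
proof -
  have "((\<lambda>s. c * s^k) has_integral ((\<lambda>s. c * s^(Suc k) / real (Suc k)) t - (\<lambda>s. c * s^(Suc k) / real (Suc k)) 0)) {0..t}"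
  proof (rule fundamental_theorem_of_calculus[OF t])
    fix x :: real assume "x \<in> {0..t}"
    have "((\<lambda>s. c * s^(Suc k) / real (Suc k)) has_real_derivative c * x^k) (at x within {0..t})"
      by (rule derivative_eq_intros refl | simp)+
    then show "((\<lambda>s. c * s^(Suc k) / real (Suc k)) has_vector_derivative c * x^k) (at x within {0..t})"
      by (simp add: has_real_derivative_iff_has_vector_derivative)
  qed
  from integral_unique[OF this] show ?thesis by simp
qed

lemma picard_fwd:
  fixes F :: "'b::euclidean_space \<Rightarrow> 'b" and a :: 'b
  assumes lip: "\<And>x y. norm (F x - F y) \<le> K * norm (x - y)" and K: "0 < K"
  shows "\<exists>y. y 0 = a \<and> (\<forall>R t. 0 \<le> t \<longrightarrow> t \<le> R \<longrightarrow> (y has_vector_derivative F (y t)) (at t within {0..R}))"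
proof -
  have contF: "continuous_on UNIV F"
    by (rule lipschitz_on_continuous_on[of K]) (auto intro!: lipschitz_onI simp: dist_norm lip less_imp_le[OF K])
  define P :: "nat \<Rightarrow> real \<Rightarrow> 'b" where "P = rec_nat (\<lambda>t. a) (\<lambda>n p t. a + integral {0..t} (\<lambda>s. F (p s)))"
  have P0: "P 0 = (\<lambda>t. a)" and PS: "P (Suc n) = (\<lambda>t. a + integral {0..t} (\<lambda>s. F (P n s)))" for n
    by (simp_all add: P_def)
  have cont: "continuous_on {0..R} (P n)" for n R
  proof (induction n arbitrary: R)
    case 0 then show ?case by (simp add: P0)
  next
    case (Suc n)
    have cF: "continuous_on {0..R} (\<lambda>s. F (P n s))"
      by (rule continuous_on_compose2[OF contF Suc.IH]) auto
    have "\<forall>t\<in>{0..R}. continuous (at t within {0..R}) (\<lambda>u. a + integral {0..u} (\<lambda>s. F (P n s)))"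
    proof
      fix t assume "t \<in> {0..R}"
      have "((\<lambda>u. integral {0..u} (\<lambda>s. F (P n s))) has_vector_derivative F (P n t)) (at t within {0..R})"
        by (rule integral_has_vector_derivative[OF cF \<open>t \<in> {0..R}\<close>])
      then show "continuous (at t within {0..R}) (\<lambda>u. a + integral {0..u} (\<lambda>s. F (P n s)))"
        by (intro continuous_intros) (rule has_vector_derivative_continuous)
    qed
    then show ?case unfolding PS by (simp add: continuous_on_eq_continuous_within)
  qed
  have contFP: "continuous_on {0..R} (\<lambda>s. F (P n s))" for n R
    by (rule continuous_on_compose2[OF contF cont]) auto
  have intg: "(\<lambda>s. F (P n s)) integrable_on {0..t}" for n t
    by (rule integrable_continuous_real[OF contFP])
  define C where "C = norm (F a)"
  have C0: "0 \<le> C" by (simp add: C_def)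
  have bound: "0 \<le> t \<Longrightarrow> norm (P (Suc n) t - P n t) \<le> C * K^n * t^(Suc n) / fact (Suc n)" for n t
  proof (induction n arbitrary: t)
    case 0
    then show ?case by (simp add: P0 PS C_def content_real)
  next
    case (Suc n)
    have "P (Suc (Suc n)) t - P (Suc n) t = integral {0..t} (\<lambda>s. F (P (Suc n) s) - F (P n s))"
    proof -
      have e1: "P (Suc (Suc n)) t = a + integral {0..t} (\<lambda>s. F (P (Suc n) s))" by (simp only: PS[of "Suc n"])
      have e2: "P (Suc n) t = a + integral {0..t} (\<lambda>s. F (P n s))" by (simp only: PS[of n])
      show ?thesis unfolding e1 e2 by (simp add: Henstock_Kurzweil_Integration.integral_diff[OF intg intg])
    qed
    also have "norm \<dots> \<le> integral {0..t} (\<lambda>s. (K * (C * K^n / fact (Suc n))) * s^(Suc n))"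
    proof (rule integral_norm_bound_integral)
      show "(\<lambda>s. F (P (Suc n) s) - F (P n s)) integrable_on {0..t}"
        by (rule integrable_diff[OF intg intg])
      show "(\<lambda>s. (K * (C * K^n / fact (Suc n))) * s^(Suc n)) integrable_on {0..t}"
        by (intro integrable_continuous_real continuous_intros)
      fix s assume s: "s \<in> {0..t}"
      have "norm (F (P (Suc n) s) - F (P n s)) \<le> K * norm (P (Suc n) s - P n s)" by (rule lip)
      also have "\<dots> \<le> K * (C * K^n * s^(Suc n) / fact (Suc n))"
        using Suc.IH[of s] s K by (intro mult_left_mono) auto
      finally show "norm (F (P (Suc n) s) - F (P n s)) \<le> (K * (C * K^n / fact (Suc n))) * s^(Suc n)"
        by (simp add: field_simps)
    qed
    also have "\<dots> = (K * (C * K^n / fact (Suc n))) * t^(Suc (Suc n)) / real (Suc (Suc n))"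
      by (rule integral_poly[OF Suc.prems])
    also have "\<dots> = C * K^(Suc n) * t^(Suc (Suc n)) / fact (Suc (Suc n))"
      by (simp add: field_simps fact_Suc[of "Suc n"] del: fact_Suc)
    finally show ?case .
  qed
  define D where "D i t = P (Suc i) t - P i t" for i t
  define y where "y t = a + (\<Sum>i. D i t)" for t
  have tele: "P n t = a + (\<Sum>i<n. D i t)" for n t
    unfolding D_def using sum_lessThan_telescope[of "\<lambda>i. P i t" n] by (simp add: P0)
  have ulim: "uniform_limit {0..R} P y sequentially" if R: "0 \<le> R" for R
  proof -
    define M where "M n = C * K^n * R^(Suc n) / fact (Suc n)" for n
    have sM: "summable M"
    proof (rule summable_comparison_test)
      show "summable (\<lambda>n. C * R * (inverse (fact n) * (K * R)^n))"
        by (intro summable_mult summable_exp)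
      show "\<exists>N. \<forall>n\<ge>N. norm (M n) \<le> C * R * (inverse (fact n) * (K * R)^n)"
      proof (intro exI allI impI)
        fix n :: nat
        have "fact n \<le> (fact (Suc n) :: real)" by (rule fact_mono) simp
        moreover have "0 < (fact n :: real)" by simp
        moreover have "0 \<le> C * R * (K * R)^n" using C0 R K by simp
        ultimately have "C * R * (K * R)^n / fact (Suc n) \<le> C * R * (K * R)^n / fact n"
          by (intro divide_left_mono) auto
        moreover have "M n = C * R * (K * R)^n / fact (Suc n)"
          by (simp add: M_def power_mult_distrib algebra_simps)
        moreover have "0 \<le> M n" using C0 R K by (simp add: M_def)
        moreover have "C * R * (inverse (fact n) * (K * R)^n) = C * R * (K * R)^n / fact n"
          by (simp add: divide_inverse)
        ultimately show "norm (M n) \<le> C * R * (inverse (fact n) * (K * R)^n)"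
          by simp
      qed
    qed
    have "uniform_limit {0..R} (\<lambda>n t. \<Sum>i<n. D i t) (\<lambda>t. \<Sum>i. D i t) sequentially"
    proof (rule Weierstrass_m_test[OF _ sM])
      fix n t assume t: "t \<in> {0..R}"
      have "norm (D n t) \<le> C * K^n * t^(Suc n) / fact (Suc n)" using bound[of t n] t by (simp add: D_def)
      also have "\<dots> \<le> M n" unfolding M_def using t C0 K
        by (intro divide_right_mono mult_left_mono power_mono) auto
      finally show "norm (D n t) \<le> M n" .
    qed
    then have "uniform_limit {0..R} (\<lambda>n t. a + (\<Sum>i<n. D i t)) (\<lambda>t. a + (\<Sum>i. D i t)) sequentially"
      by (intro uniform_limit_intros)
    then show ?thesis unfolding y_def tele[symmetric] by (simp add: fun_eq_iff)
  qed
  have conty: "continuous_on {0..R} y" if "0 \<le> R" for R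
    by (rule uniform_limit_theorem[OF _ ulim[OF that]]) (auto intro: cont always_eventually)
  have ulimF: "uniform_limit {0..R} (\<lambda>n s. F (P n s)) (\<lambda>s. F (y s)) sequentially" if "0 \<le> R" for R
    unfolding uniform_limit_iff
  proof (intro allI impI)
    fix e :: real assume e: "0 < e"
    have "\<forall>\<^sub>F n in sequentially. \<forall>x\<in>{0..R}. dist (P n x) (y x) < e / K"
      using ulim[OF that] e K unfolding uniform_limit_iff by simp
    then show "\<forall>\<^sub>F n in sequentially. \<forall>x\<in>{0..R}. dist (F (P n x)) (F (y x)) < e"
    proof (rule eventually_mono, intro ballI)
      fix n x assume H: "\<forall>x\<in>{0..R}. dist (P n x) (y x) < e / K" and x: "x \<in> {0..R}"
      have "dist (F (P n x)) (F (y x)) \<le> K * dist (P n x) (y x)" using lip by (simp add: dist_norm)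
      also have "\<dots> < K * (e / K)" using H x K by (intro mult_strict_left_mono) auto
      finally show "dist (F (P n x)) (F (y x)) < e" using K by simp
    qed
  qed
  have inteq: "y t = a + integral {0..t} (\<lambda>s. F (y s))" if t: "0 \<le> t" for t
  proof -
    obtain I J where I: "\<And>n. ((\<lambda>s. F (P n s)) has_integral I n) {0..t}"
      and J: "((\<lambda>s. F (y s)) has_integral J) {0..t}" and IJ: "I \<longlonglongrightarrow> J"
      using uniform_limit_integral[OF ulimF[OF t] contFP] by auto
    have "(\<lambda>n. P (Suc n) t) \<longlonglongrightarrow> y t"
      using tendsto_uniform_limitI[OF ulim[OF t], of t] t LIMSEQ_Suc by auto
    moreover have "(\<lambda>n. P (Suc n) t) = (\<lambda>n. a + I n)"
      unfolding PS using I by (simp add: integral_unique fun_eq_iff)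
    moreover have "(\<lambda>n. a + I n) \<longlonglongrightarrow> a + J" using IJ by (intro tendsto_intros)
    ultimately have "y t = a + J" using LIMSEQ_unique by metis
    then show ?thesis using J by (simp add: integral_unique)
  qed
  have "y 0 = a" using inteq[of 0] by simp
  moreover have "(y has_vector_derivative F (y t)) (at t within {0..R})" if "0 \<le> t" "t \<le> R" for R t
  proof -
    have R: "0 \<le> R" using that by simp
    have cF: "continuous_on {0..R} (\<lambda>s. F (y s))"
      by (rule continuous_on_compose2[OF contF conty[OF R]]) auto
    have "((\<lambda>u. a + integral {0..u} (\<lambda>s. F (y s))) has_vector_derivative F (y t)) (at t within {0..R})"
      using integral_has_vector_derivative[OF cF, of t] that by (auto intro!: derivative_eq_intros)
    then show ?thesis
      by (rule has_vector_derivative_transform[rotated 2]) (use that inteq in auto)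
  qed
  ultimately show ?thesis by blast
qed

lemma hvd_within_Un:
  assumes "(f has_vector_derivative D) (at x within S)" "(f has_vector_derivative D) (at x within T)"
  shows "(f has_vector_derivative D) (at x within (S \<union> T))"
  using assms unfolding has_vector_derivative_def has_derivative_at_within Lim_within_Un by blast

lemma within_Icc_to_ge:
  assumes "(y has_vector_derivative D) (at t within {0..R})" "0 \<le> t" "t < R"
  shows "(y has_vector_derivative D) (at t within {0..})"
proof -
  have "at t within {0..R} = at t within {(0::real)..}"
    by (rule at_within_nhd[of _ "{..<R}"]) (use assms in auto)
  then show ?thesis using assms(1) by simp
qed

lemma ode_exists:
  fixes F :: "'b::euclidean_space \<Rightarrow> 'b" and a :: 'b
  assumes lip: "\<And>x y. norm (F x - F y) \<le> K * norm (x - y)" and K: "0 < K"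
  shows "\<exists>y. y 0 = a \<and> (\<forall>t. (y has_vector_derivative F (y t)) (at t))"
proof -
  obtain yp where yp0: "yp 0 = a" and yp: "\<And>R t. 0 \<le> t \<Longrightarrow> t \<le> R \<Longrightarrow> (yp has_vector_derivative F (yp t)) (at t within {0..R})"
    using picard_fwd[OF lip K, of a] by blast
  have lip': "norm ((- F x) - (- F y)) \<le> K * norm (x - y)" for x y
    using lip[of y x] by (simp add: norm_minus_commute)
  obtain ym where ym0: "ym 0 = a" and ym: "\<And>R t. 0 \<le> t \<Longrightarrow> t \<le> R \<Longrightarrow> (ym has_vector_derivative - F (ym t)) (at t within {0..R})"
    using picard_fwd[of "\<lambda>x. - F x", OF lip' K, of a] by blast
  have ypat: "(yp has_vector_derivative F (yp t)) (at t)" if "0 < t" for t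
  proof -
    have "t \<in> interior {0..t+1}" using that by simp
    then show ?thesis using yp[of t "t+1"] that at_within_interior by fastforce
  qed
  have ymat: "(ym has_vector_derivative - F (ym t)) (at t)" if "0 < t" for t
  proof -
    have "t \<in> interior {0..t+1}" using that by simp
    then show ?thesis using ym[of t "t+1"] that at_within_interior by fastforce
  qed
  define Y where "Y t = (if 0 \<le> t then yp t else ym (- t))" for t
  have "(Y has_vector_derivative F (Y t)) (at t)" for t
  proof (cases "0 < t")
    case True
    show ?thesis
      by (rule has_vector_derivative_transform_within_open[OF _ open_greaterThan, of yp _ t 0])
         (use True ypat[OF True] in \<open>auto simp: Y_def\<close>)
  next
    case False
    show ?thesis
    proof (cases "t < 0")
      case True
      have "((ym \<circ> uminus) has_vector_derivative (-1) *\<^sub>R (- F (ym (- t)))) (at t)"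
        by (rule vector_diff_chain_at) (auto intro!: derivative_eq_intros ymat simp: True)
      then have "((\<lambda>s. ym (- s)) has_vector_derivative F (Y t)) (at t)"
        using True by (simp add: o_def Y_def)
      then show ?thesis
        by (rule has_vector_derivative_transform_within_open[OF _ open_lessThan, of _ _ t 0])
           (use True in \<open>auto simp: Y_def\<close>)
    next
      case False
      then have t0: "t = 0" using \<open>\<not> 0 < t\<close> by simp
      have r: "(Y has_vector_derivative F a) (at 0 within {0..})"
      proof -
        have "(yp has_vector_derivative F a) (at 0 within {0..})"
          using within_Icc_to_ge[OF yp[of 0 1]] yp0 by simp
        then show ?thesis
          by (rule has_vector_derivative_transform[rotated 2]) (auto simp: Y_def)
      qed
      have l: "(Y has_vector_derivative F a) (at 0 within {..0})"
      proof -
        have d1: "(ym has_vector_derivative - F a) (at 0 within {0..})"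
          using within_Icc_to_ge[OF ym[of 0 1]] ym0 by simp
        have im: "uminus ` {..0::real} = {0..}" by (auto simp: image_iff intro: bexI[of _ "- x" for x])
        have "((ym \<circ> uminus) has_vector_derivative (-1) *\<^sub>R (- F a)) (at 0 within {..0})"
          by (rule vector_diff_chain_within) (auto intro!: derivative_eq_intros simp: im d1)
        then have "((\<lambda>s. ym (- s)) has_vector_derivative F a) (at 0 within {..0})" by (simp add: o_def)
        then show ?thesis
          by (rule has_vector_derivative_transform[rotated 2]) (auto simp: Y_def yp0 ym0)
      qed
      have "(Y has_vector_derivative F a) (at 0 within ({0..} \<union> {..0}))" by (rule hvd_within_Un[OF r l])
      moreover have "{0..} \<union> {..0::real} = UNIV" by auto
      ultimately show ?thesis using t0 yp0 by (simp add: Y_def)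
    qed
  qed
  moreover have "Y 0 = a" by (simp add: Y_def yp0)
  ultimately show ?thesis by blast
qed

lemma norm_pair_le: fixes a :: "'a::real_normed_vector" and b :: "'b::real_normed_vector"
  shows "norm (a, b) \<le> norm a + norm b"
proof (rule power2_le_imp_le)
  show "(norm (a, b))^2 \<le> (norm a + norm b)^2"
    by (simp add: norm_Pair power2_eq_square algebra_simps)
qed simp

context hmc_pot
begin

definition HF :: "'a \<times> 'a \<Rightarrow> 'a \<times> 'a" where "HF p = (snd p, - grad (fst p))"

lemma HF_lip: "norm (HF p - HF q) \<le> (1 + L) * norm (p - q)"
proof -
  have "HF p - HF q = (snd p - snd q, - (grad (fst p) - grad (fst q)))" by (simp add: HF_def)
  then have "norm (HF p - HF q) \<le> norm (snd p - snd q) + norm (grad (fst p) - grad (fst q))"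
    using norm_pair_le[of "snd p - snd q" "- (grad (fst p) - grad (fst q))"] by (simp add: norm_minus_commute)
  also have "\<dots> \<le> norm (p - q) + L * norm (fst p - fst q)"
  proof -
    have e: "p - q = (fst p - fst q, snd p - snd q)" by (simp add: prod_eq_iff)
    have "norm (snd p - snd q) \<le> norm (p - q)" by (subst e) (rule norm_snd_le)
    then show ?thesis using grad_lipschitz[of "fst p" "fst q"] by simp
  qed
  also have "\<dots> \<le> norm (p - q) + L * norm (p - q)"
  proof -
    have e: "p - q = (fst p - fst q, snd p - snd q)" by (simp add: prod_eq_iff)
    have "norm (fst p - fst q) \<le> norm (p - q)" by (subst e) (rule norm_fst_le)
    then show ?thesis using L_pos by (intro add_left_mono mult_left_mono) auto
  qed
  finally show ?thesis by (simp add: algebra_simps)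
qed

lemma K_pos: "0 < 1 + L" using L_pos by simp

definition sol :: "'a \<times> 'a \<Rightarrow> real \<Rightarrow> 'a \<times> 'a" where
  "sol p = (THE z. z 0 = p \<and> (\<forall>t. (z has_vector_derivative (snd (z t), - grad (fst (z t)))) (at t)))"

lemma sol_ex1: "\<exists>!z. z 0 = p \<and> (\<forall>t. (z has_vector_derivative (snd (z t), - grad (fst (z t)))) (at t))"
proof -
  obtain y where y: "y 0 = p" "\<And>t. (y has_vector_derivative HF (y t)) (at t)"
    using ode_exists[OF HF_lip K_pos, of p] by blast
  show ?thesis
  proof (rule ex1I[of _ y])
    show "y 0 = p \<and> (\<forall>t. (y has_vector_derivative (snd (y t), - grad (fst (y t)))) (at t))"
      using y by (simp add: HF_def)
    fix z assume z: "z 0 = p \<and> (\<forall>t. (z has_vector_derivative (snd (z t), - grad (fst (z t)))) (at t))"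
    have "z = y"
      by (rule ode_unique[where F=HF, OF _ y(2) HF_lip]) (use z y in \<open>auto simp: HF_def\<close>)
    then show "z = y" .
  qed
qed

lemma sol: "sol p 0 = p" "(sol p has_vector_derivative HF (sol p t)) (at t)"
  using theI'[OF sol_ex1[of p]] unfolding sol_def[symmetric] by (auto simp: HF_def)

lemma ham_flow_sol: "ham_flow grad T x v = fst (sol (x, v) T)"
  by (simp add: ham_flow_def sol_def)

lemma sol_lip:
  assumes "0 \<le> T"
  shows "norm (sol p T - sol q T) \<le> exp ((1 + L) * T) * norm (p - q)"
proof -
  have "(norm (sol p T - sol q T))^2 \<le> exp (2 * (1 + L) * T) * (norm (sol p 0 - sol q 0))^2"
    by (rule gronwall_fwd[OF sol(2) sol(2) HF_lip assms])
  also have "\<dots> = (exp ((1 + L) * T) * norm (p - q))^2"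
    by (simp add: sol power_mult_distrib exp_double[symmetric] mult.assoc)
  finally show ?thesis by (rule power2_le_imp_le) simp
qed

lemma flow_continuous:
  assumes "0 \<le> T"
  shows "continuous_on UNIV (\<lambda>p. ham_flow grad T (fst p) (snd p))"
proof (rule lipschitz_on_continuous_on[of "exp ((1 + L) * T)"], rule lipschitz_onI)
  fix p q :: "'a \<times> 'a"
  have "dist (ham_flow grad T (fst p) (snd p)) (ham_flow grad T (fst q) (snd q)) = norm (fst (sol p T - sol q T))"
    by (simp add: ham_flow_sol dist_norm)
  also have "\<dots> \<le> norm (sol p T - sol q T)"
  proof -
    have e: "sol p T - sol q T = (fst (sol p T - sol q T), snd (sol p T - sol q T))" by (simp add: prod_eq_iff)
    show ?thesis by (subst (2) e) (rule norm_fst_le)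
  qed
  also have "\<dots> \<le> exp ((1 + L) * T) * dist p q" using sol_lip[OF assms] by (simp add: dist_norm)
  finally show "dist (ham_flow grad T (fst p) (snd p)) (ham_flow grad T (fst q) (snd q)) \<le> exp ((1 + L) * T) * dist p q" .
qed simp

end

lemma hvd_fst: "(f has_vector_derivative D) F \<Longrightarrow> ((\<lambda>t. fst (f t)) has_vector_derivative fst D) F"
  unfolding has_vector_derivative_def by (drule has_derivative_fst) simp

lemma hvd_snd: "(f has_vector_derivative D) F \<Longrightarrow> ((\<lambda>t. snd (f t)) has_vector_derivative snd D) F"
  unfolding has_vector_derivative_def by (drule has_derivative_snd) simp

lemma hvd_continuous_on: "(\<And>t. (f has_vector_derivative f' t) (at t)) \<Longrightarrow> continuous_on S f"
  by (meson continuous_at_imp_continuous_on has_vector_derivative_continuous)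

context hmc_pot
begin

lemma flow_contract:
  assumes T: "0 < T" and LT: "L * T^2 \<le> 1/20"
  shows "norm (fst (sol (x, v) T) - fst (sol (y, v) T)) \<le> (1 - \<alpha> * T^2 / 10) * norm (x - y)"
proof -
  define X where "X = sol (x, v)"
  define Y where "Y = sol (y, v)"
  define z where "z t = fst (X t) - fst (Y t)" for t
  define w where "w t = snd (X t) - snd (Y t)" for t
  define g where "g t = grad (fst (X t)) - grad (fst (Y t))" for t
  have dX: "(X has_vector_derivative HF (X t)) (at t)" for t unfolding X_def by (rule sol)
  have dY: "(Y has_vector_derivative HF (Y t)) (at t)" for t unfolding Y_def by (rule sol)
  have dz: "(z has_vector_derivative w t) (at t)" for t
    unfolding z_def[abs_def] w_def
    using hvd_fst[OF dX[of t]] hvd_fst[OF dY[of t]] by (auto intro!: derivative_eq_intros simp: HF_def)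
  have dw: "(w has_vector_derivative - g t) (at t)" for t
    unfolding w_def[abs_def] g_def
    using hvd_snd[OF dX[of t]] hvd_snd[OF dY[of t]] by (auto intro!: derivative_eq_intros simp: HF_def)
  have z0: "z 0 = x - y" and w0: "w 0 = 0"
    by (simp_all add: z_def w_def X_def Y_def sol)
  have coc: "(norm (g t))^2 \<le> L * (g t \<bullet> z t)" for t unfolding g_def z_def by (rule cocoercive)
  have sm: "\<alpha> * (norm (z t))^2 \<le> g t \<bullet> z t" for t unfolding g_def z_def by (rule strong_mono)
  have glip: "norm (g t) \<le> L * norm (z t)" for t unfolding g_def z_def by (rule grad_lipschitz)
  have cz: "continuous_on S z" for S by (rule hvd_continuous_on[OF dz])
  have cw: "continuous_on S w" for S by (rule hvd_continuous_on[OF dw])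
  obtain k where k: "k \<in> {0..T}" "\<And>s. s \<in> {0..T} \<Longrightarrow> norm (z s) \<le> norm (z k)"
  proof -
    have "continuous_on {0..T} (\<lambda>s. norm (z s))" by (intro continuous_on_norm cz)
    then have "\<exists>x\<in>{0..T}. \<forall>y\<in>{0..T}. norm (z y) \<le> norm (z x)"
      using continuous_attains_sup[of "{0..T}" "\<lambda>s. norm (z s)"] T by auto
    then show ?thesis using that by blast
  qed
  define M where "M = norm (z k)"
  have M0: "0 \<le> M" by (simp add: M_def)
  have zM: "s \<in> {0..T} \<Longrightarrow> norm (z s) \<le> M" for s using k(2) by (simp add: M_def)
  have gM: "s \<in> {0..T} \<Longrightarrow> norm (g s) \<le> L * M" for s
    using glip[of s] zM[of s] L_pos by (smt (verit) mult_left_mono)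
  have wb: "norm (w t) \<le> L * M * t" if t: "t \<in> {0..T}" for t
  proof (cases "t = 0")
    case True then show ?thesis using w0 by simp
  next
    case False
    then have t0: "0 < t" using t by simp
    have "norm (w t - w 0) \<le> L * M * t - L * M * 0"
    proof (rule differentiable_bound_general[OF t0, where f'="\<lambda>s. - g s" and \<phi>'="\<lambda>s. L * M"])
      show "continuous_on {0..t} w" by (rule cw)
      show "continuous_on {0..t} (\<lambda>s. L * M * s)" by (intro continuous_intros)
      show "(w has_vector_derivative - g s) (at s)" for s by (rule dw)
      show "((\<lambda>s. L * M * s) has_vector_derivative L * M) (at s)" for s
        by (auto intro!: derivative_eq_intros)
      show "norm (- g s) \<le> L * M" if "0 < s" "s < t" for s using gM[of s] that t by simp
    qed
    then show ?thesis using w0 by simp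
  qed
  have zb: "norm (z t - z 0) \<le> L * M * T * t" if t: "t \<in> {0..T}" for t
  proof (cases "t = 0")
    case True then show ?thesis by simp
  next
    case False
    then have t0: "0 < t" using t by simp
    have "norm (z t - z 0) \<le> L * M * T * t - L * M * T * 0"
    proof (rule differentiable_bound_general[OF t0, where f'="\<lambda>s. w s" and \<phi>'="\<lambda>s. L * M * T"])
      show "continuous_on {0..t} z" by (rule cz)
      show "continuous_on {0..t} (\<lambda>s. L * M * T * s)" by (intro continuous_intros)
      show "(z has_vector_derivative w s) (at s)" for s by (rule dz)
      show "((\<lambda>s. L * M * T * s) has_vector_derivative L * M * T) (at s)" for s
        by (auto intro!: derivative_eq_intros)
      show "norm (w s) \<le> L * M * T" if "0 < s" "s < t" for s
      proof -
        have "norm (w s) \<le> L * M * s" using wb[of s] that t by simp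
        also have "\<dots> \<le> L * M * T" using that t L_pos M0 by (intro mult_left_mono) auto
        finally show ?thesis .
      qed
    qed
    then show ?thesis by simp
  qed
  have dzb: "norm (z t - z 0) \<le> M / 20" if t: "t \<in> {0..T}" for t
  proof -
    have "L * M * T * t \<le> L * M * T * T" using t L_pos M0 T by (intro mult_left_mono) auto
    also have "\<dots> = (L * T^2) * M" by (simp add: power2_eq_square)
    also have "\<dots> \<le> 1/20 * M" using LT M0 by (intro mult_right_mono) auto
    finally show ?thesis using zb[OF t] by simp
  qed
  have Mb: "M \<le> 20/19 * norm (z 0)"
  proof -
    have "norm (z k) \<le> norm (z 0) + norm (z k - z 0)" by (metis norm_triangle_sub add.commute)
    then show ?thesis using dzb[OF k(1)] by (simp add: M_def)
  qed
  have zlow: "4/5 * (norm (z 0))^2 \<le> (norm (z t))^2" if t: "t \<in> {0..T}" for t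
  proof -
    have "norm (z 0) \<le> norm (z t) + norm (z t - z 0)" by (metis norm_triangle_sub norm_minus_commute add.commute)
    then have "18/19 * norm (z 0) \<le> norm (z t)" using dzb[OF t] Mb by linarith
    moreover have "0 \<le> 18/19 * norm (z 0)" by simp
    ultimately have "(18/19 * norm (z 0))^2 \<le> (norm (z t))^2" by (rule power_mono)
    moreover have "(18/19 * norm (z 0))^2 = 324/361 * (norm (z 0))^2" by (simp add: power_mult_distrib power2_eq_square)
    moreover have "4/5 * (norm (z 0))^2 \<le> 324/361 * (norm (z 0))^2" by (intro mult_right_mono) auto
    ultimately show ?thesis by linarith
  qed
  define c0 where "c0 = \<alpha> * (4/5 * (norm (z 0))^2)"
  have plow: "c0 \<le> g t \<bullet> z t" if "t \<in> {0..T}" for t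
  proof -
    have "c0 \<le> \<alpha> * (norm (z t))^2" unfolding c0_def using zlow[OF that] alpha_pos by (intro mult_left_mono) auto
    then show ?thesis using sm[of t] by linarith
  qed
  define N1 where "N1 t = (norm (z t + (T - t) *\<^sub>R w t))^2" for t
  define N2 where "N2 t = (norm (w t))^2" for t
  define U where "U t = N1 t + L/3 * (T - t)^4 * N2 t - c0 * (T - t)^2 / 2" for t
  define E where "E t = - 2 * (T - t) * (g t \<bullet> z t) - 2 * ((T - t)^2 + L/3 * (T - t)^4) * (w t \<bullet> g t)
      - 4 * L / 3 * (T - t)^3 * (norm (w t))^2 + c0 * (T - t)" for t
  have dU: "(U has_real_derivative E t) (at t)" for t
  proof -
    have du: "((\<lambda>t. z t + (T - t) *\<^sub>R w t) has_vector_derivative - ((T - t) *\<^sub>R g t)) (at t)"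
      by (rule derivative_eq_intros dz dw refl | simp)+
    have "(U has_real_derivative
        2 * ((z t + (T - t) *\<^sub>R w t) \<bullet> - ((T - t) *\<^sub>R g t))
        + (L/3 * (real 4 * (T - t)^3 * (0 - 1)) * (norm (w t))^2 + L/3 * (T - t)^4 * (2 * (w t \<bullet> - g t)))
        - c0 * (real 2 * (T - t) * (0 - 1)) / 2) (at t)"
    proof -
      have d1: "(N1 has_real_derivative 2 * ((z t + (T - t) *\<^sub>R w t) \<bullet> - ((T - t) *\<^sub>R g t))) (at t)"
        unfolding N1_def[abs_def] by (rule vd_norm_sq[OF du])
      have d2: "(N2 has_real_derivative 2 * (w t \<bullet> - g t)) (at t)"
        unfolding N2_def[abs_def] by (rule vd_norm_sq[OF dw])
      show ?thesis
        unfolding U_def[abs_def]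
        by (rule derivative_eq_intros d1 d2 refl | simp add: N2_def field_simps)+
    qed
    moreover have "2 * ((z t + (T - t) *\<^sub>R w t) \<bullet> - ((T - t) *\<^sub>R g t))
        + (L/3 * (real 4 * (T - t)^3 * (0 - 1)) * (norm (w t))^2 + L/3 * (T - t)^4 * (2 * (w t \<bullet> - g t)))
        - c0 * (real 2 * (T - t) * (0 - 1)) / 2 = E t"
      unfolding E_def by (simp add: inner_add_left inner_commute[of "z t"] algebra_simps power2_eq_square) (simp add: field_simps)
    ultimately show ?thesis by simp
  qed
  have Eneg: "E t \<le> 0" if t: "t \<in> {0..T}" for t
  proof (cases "t = T")
    case True then show ?thesis by (simp add: E_def)
  next
    case False
    define s where "s = T - t"
    have s0: "0 < s" using t False by (simp add: s_def)
    have sT: "s \<le> T" using t by (simp add: s_def)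
    have Ls: "L * s^2 \<le> 1/20"
    proof -
      have "L * s^2 \<le> L * T^2" using sT s0 L_pos by (intro mult_left_mono power_mono) auto
      then show ?thesis using LT by linarith
    qed
    define \<beta> where "\<beta> = s^2 + L/3 * s^4"
    have e: "0 < s / L" using s0 L_pos by simp
    have cross: "- (2 * \<beta>) * (w t \<bullet> g t) \<le> s / L * (norm (g t))^2 + (2 * \<beta>)^2 * (norm (w t))^2 / (4 * (s / L))"
      by (rule inner_le_amgm[OF e]) (use s0 L_pos in \<open>simp add: \<beta>_def\<close>)
    have bsq: "\<beta>^2 \<le> 4/3 * s^4"
    proof -
      have bq: "\<beta> = s^2 * (1 + L * s^2 / 3)" by (simp add: \<beta>_def power2_eq_square power4_eq_xxxx algebra_simps)
      have q: "(1 + L * s^2 / 3)^2 \<le> 4/3"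
      proof -
        have "0 \<le> L * s^2" using L_pos by simp
        then have "(1 + L * s^2 / 3)^2 \<le> (1 + 1/60)^2" using Ls by (intro power_mono) auto
        moreover have "(1 + 1/60 :: real)^2 \<le> 4/3" by (simp add: power2_eq_square)
        ultimately show ?thesis by linarith
      qed
      have "\<beta>^2 = (s^2)^2 * (1 + L * s^2 / 3)^2" by (simp add: bq power_mult_distrib)
      also have "\<dots> \<le> (s^2)^2 * (4/3)" using q by (intro mult_left_mono) auto
      also have "\<dots> = 4/3 * s^4" by (simp add: power4_eq_xxxx power2_eq_square)
      finally show ?thesis .
    qed
    have c2: "(2 * \<beta>)^2 * (norm (w t))^2 / (4 * (s / L)) \<le> 4 * L / 3 * s^3 * (norm (w t))^2"
    proof -
      have "(2 * \<beta>)^2 * (norm (w t))^2 / (4 * (s / L)) = L * \<beta>^2 * (norm (w t))^2 / s"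
        using s0 L_pos by (simp add: field_simps power2_eq_square)
      also have "\<dots> \<le> L * (4/3 * s^4) * (norm (w t))^2 / s"
        using bsq L_pos s0 by (intro divide_right_mono mult_right_mono mult_left_mono) auto
      also have "\<dots> = 4 * L / 3 * s^3 * (norm (w t))^2" using s0 by (simp add: field_simps power2_eq_square power3_eq_cube power4_eq_xxxx)
      finally show ?thesis .
    qed
    have c3: "s / L * (norm (g t))^2 \<le> s * (g t \<bullet> z t)"
    proof -
      have "s / L * (norm (g t))^2 \<le> s / L * (L * (g t \<bullet> z t))" using coc[of t] e by (intro mult_left_mono) auto
      then show ?thesis using L_pos by simp
    qed
    have "c0 \<le> g t \<bullet> z t" by (rule plow[OF t])
    then have c4: "c0 * s \<le> s * (g t \<bullet> z t)" using s0 by (simp add: mult.commute mult_right_mono)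
    have "E t = - 2 * s * (g t \<bullet> z t) - (2 * \<beta>) * (w t \<bullet> g t) - 4 * L / 3 * s^3 * (norm (w t))^2 + c0 * s"
      unfolding E_def s_def \<beta>_def by (simp add: algebra_simps)
    also have "\<dots> \<le> 0" using cross c2 c3 c4 by linarith
    finally show ?thesis .
  qed
  have "U T \<le> U 0"
    by (rule DERIV_nonpos_imp_nonincreasing[of 0 T U]) (use T dU Eneg in auto)
  then have "(norm (z T))^2 \<le> (norm (z 0))^2 - c0 * T^2 / 2"
    by (simp add: U_def N1_def N2_def w0)
  also have "\<dots> = (1 - \<alpha> * T^2 * (2/5)) * (norm (z 0))^2" by (simp add: c0_def algebra_simps)
  also have "\<dots> \<le> (1 - \<alpha> * T^2 / 5) * (norm (z 0))^2"
    using alpha_pos by (intro mult_right_mono) auto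
  finally have main: "(norm (z T))^2 \<le> (1 - \<alpha> * T^2 / 5) * (norm (z 0))^2" .
  have e: "0 \<le> \<alpha> * T^2" "\<alpha> * T^2 \<le> 10"
  proof -
    show "0 \<le> \<alpha> * T^2" using alpha_pos by simp
    have "\<alpha> * T^2 \<le> L * T^2" using alpha_le_L by (intro mult_right_mono) auto
    then show "\<alpha> * T^2 \<le> 10" using LT by linarith
  qed
  have "norm (z T) \<le> (1 - \<alpha> * T^2 / 10) * norm (z 0)"
    using sq_contract[of "norm (z T)" "\<alpha> * T^2" "norm (z 0)"] main e by simp
  then show ?thesis unfolding z_def X_def Y_def using z0 by (simp add: z_def X_def Y_def)
qed

end

lemma gauss_density_prod:
  fixes v :: "'a::euclidean_space"
  shows "(2 * pi) powr (- real DIM('a) / 2) * exp (- ((norm v)^2) / 2)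
       = (\<Prod>b\<in>Basis. std_normal_density (v \<bullet> b))"
proof -
  have "(norm v)^2 = v \<bullet> v" by (rule power2_norm_eq_inner)
  also have "\<dots> = (\<Sum>b\<in>Basis. (v \<bullet> b) * (v \<bullet> b))" by (rule euclidean_inner)
  finally have n: "(norm v)^2 = (\<Sum>b\<in>Basis. (v \<bullet> b)^2)" by (simp add: power2_eq_square)
  have e: "exp (- ((norm v)^2) / 2) = (\<Prod>b\<in>Basis. exp (- ((v \<bullet> b)^2) / 2))"
    unfolding n by (simp add: exp_sum[symmetric] sum_negf sum_divide_distrib)
  have c: "(2 * pi) powr (- real DIM('a) / 2) = (1 / sqrt (2 * pi)) ^ DIM('a)"
  proof -
    have "(2 * pi) powr (- real DIM('a) / 2) = ((2 * pi) powr (1/2)) powr (- real DIM('a))"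
      by (simp add: powr_powr)
    also have "\<dots> = (1 / sqrt (2 * pi)) powr (real DIM('a))"
      by (simp add: powr_half_sqrt powr_minus_divide powr_divide)
    also have "\<dots> = (1 / sqrt (2 * pi)) ^ DIM('a)"
      by (rule powr_realpow) simp
    finally show ?thesis .
  qed
  show ?thesis unfolding c e std_normal_density_def prod.distrib by simp
qed

lemma prob_space_std_gauss: "prob_space (std_gauss :: 'a::euclidean_space measure)"
proof
  have "emeasure (std_gauss :: 'a measure) (space std_gauss)
      = (\<integral>\<^sup>+ v. ennreal ((2 * pi) powr (- real DIM('a) / 2) * exp (- ((norm v)^2) / 2)) \<partial>(lborel :: 'a measure))"
    unfolding std_gauss_def by (simp add: emeasure_density)
  also have "\<dots> = (\<integral>\<^sup>+ v. (\<Prod>b\<in>Basis. ennreal (std_normal_density (v \<bullet> b))) \<partial>(lborel :: 'a measure))"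
    unfolding gauss_density_prod by (simp add: prod_ennreal)
  also have "\<dots> = (\<Prod>b\<in>(Basis :: 'a set). (\<integral>\<^sup>+ x. ennreal (std_normal_density x) \<partial>lborel))"
    by (rule nn_integral_lborel_prod) auto
  also have "(\<integral>\<^sup>+ x. ennreal (std_normal_density x) \<partial>lborel) = 1"
  proof -
    have sp: "space (density lborel (normal_density 0 1)) = (UNIV::real set)" by simp
    have "emeasure (density lborel (normal_density 0 1)) (space (density lborel (normal_density 0 1))) = 1"
      using prob_space.emeasure_space_1[OF prob_space_normal_density[of 1 0]] by simp
    then have "emeasure (density lborel (normal_density 0 1)) UNIV = 1" by (simp only: sp)
    then show ?thesis by (simp add: emeasure_density)
  qed
  finally show "emeasure (std_gauss :: 'a measure) (space std_gauss) = 1" by simp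
qed

lemma sets_std_gauss: "sets (std_gauss :: 'a::euclidean_space measure) = sets borel"
  by (simp add: std_gauss_def)

lemma sigma_finite_std_gauss: "sigma_finite_measure (std_gauss :: 'a::euclidean_space measure)"
  using prob_space_std_gauss by (rule prob_space_imp_sigma_finite)

lemma psi_norm_cases: "psi_norm M Z = Inf {ereal l |l. l > 0 \<and> (\<integral>\<^sup>+ w. ennreal (exp ((norm (Z w))^2 / l^2)) \<partial>M) \<le> 2}"
  by (simp add: psi_norm_def)

locale qstep =
  fixes Q :: "'a::euclidean_space \<times> 'a \<Rightarrow> 'a" and c :: real
  assumes Qm[measurable]: "Q \<in> borel_measurable (borel \<Otimes>\<^sub>M borel)"
    and contr: "\<And>x y v. norm (Q (x, v) - Q (y, v)) \<le> c * norm (x - y)"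
    and c_pos: "0 < c"
begin

definition P :: "'a measure \<Rightarrow> 'a measure" where
  "P \<rho> = distr (\<rho> \<Otimes>\<^sub>M std_gauss) borel Q"

lemma Qm': assumes "sets \<rho> = sets borel" shows "Q \<in> (\<rho> \<Otimes>\<^sub>M std_gauss) \<rightarrow>\<^sub>M borel"
proof -
  have "(\<rho> \<Otimes>\<^sub>M (std_gauss :: 'a measure)) \<rightarrow>\<^sub>M borel = (borel \<Otimes>\<^sub>M (borel :: 'a measure)) \<rightarrow>\<^sub>M (borel :: 'a measure)"
    by (rule measurable_cong_sets[OF sets_pair_measure_cong[OF assms sets_std_gauss] refl])
  then show ?thesis using Qm by (simp only:)
qed

lemma P_prob:
  assumes "prob_space \<rho>" "sets \<rho> = sets borel"
  shows "prob_space (P \<rho>)" "sets (P \<rho>) = sets borel"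
proof -
  have "prob_space (\<rho> \<Otimes>\<^sub>M std_gauss)" by (rule prob_space_pair[OF assms(1) prob_space_std_gauss])
  then show "prob_space (P \<rho>)" unfolding P_def by (rule prob_space.prob_space_distr[OF _ Qm'[OF assms(2)]])
  show "sets (P \<rho>) = sets borel" by (simp add: P_def)
qed

definition \<Phi> :: "('a \<times> 'a) \<times> 'a \<Rightarrow> 'a \<times> 'a" where
  "\<Phi> u = (Q (fst (fst u), snd u), Q (snd (fst u), snd u))"

lemma \<Phi>m: fixes \<gamma> :: "('a \<times> 'a) measure" assumes s: "sets \<gamma> = sets (borel \<Otimes>\<^sub>M borel)"
  shows "\<Phi> \<in> (\<gamma> \<Otimes>\<^sub>M std_gauss) \<rightarrow>\<^sub>M (borel \<Otimes>\<^sub>M borel)"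
proof -
  show ?thesis
    by (subst measurable_cong_sets[OF sets_pair_measure_cong[OF s sets_std_gauss] refl])
       (unfold \<Phi>_def, measurable)
qed

lemma marg:
  fixes \<gamma> :: "('a \<times> 'a) measure" and sel :: "'a \<times> 'a \<Rightarrow> 'a"
  assumes s: "sets \<gamma> = sets (borel \<Otimes>\<^sub>M borel)" and selm: "sel \<in> (borel \<Otimes>\<^sub>M borel) \<rightarrow>\<^sub>M borel"
    and mu: "distr \<gamma> borel sel = \<mu>"
  shows "distr (\<gamma> \<Otimes>\<^sub>M (std_gauss :: 'a measure)) borel (\<lambda>u. Q (sel (fst u), snd u)) = P \<mu>"
proof -
  have selm': "sel \<in> \<gamma> \<rightarrow>\<^sub>M borel"
    by (subst measurable_cong_sets[OF s refl]) (rule selm)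
  have idm: "(\<lambda>x. x) \<in> (std_gauss :: 'a measure) \<rightarrow>\<^sub>M borel"
    by (rule measurable_ident_sets[OF sets_std_gauss])
  have G: "distr (std_gauss :: 'a measure) borel (\<lambda>x. x) = std_gauss"
    by (rule distr_id2) (simp add: sets_std_gauss)
  have "distr \<gamma> (borel :: 'a measure) sel \<Otimes>\<^sub>M distr (std_gauss :: 'a measure) (borel :: 'a measure) (\<lambda>x. x)
      = distr (\<gamma> \<Otimes>\<^sub>M (std_gauss :: 'a measure)) ((borel :: 'a measure) \<Otimes>\<^sub>M (borel :: 'a measure)) (\<lambda>(x, y). (sel x, y))"
    by (rule pair_measure_distr[OF selm' idm]) (simp add: G sigma_finite_std_gauss)
  then have pm: "distr (\<gamma> \<Otimes>\<^sub>M (std_gauss :: 'a measure)) (borel \<Otimes>\<^sub>M borel) (\<lambda>u. (sel (fst u), snd u)) = \<mu> \<Otimes>\<^sub>M (std_gauss :: 'a measure)"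
    by (simp add: G mu split_beta')
  have psim: "(\<lambda>u. (sel (fst u), snd u)) \<in> (\<gamma> \<Otimes>\<^sub>M (std_gauss :: 'a measure)) \<rightarrow>\<^sub>M (borel \<Otimes>\<^sub>M borel)"
    using selm' by (auto intro!: measurable_Pair measurable_compose[OF measurable_fst] measurable_compose[OF measurable_snd idm])
  have "distr (\<gamma> \<Otimes>\<^sub>M (std_gauss :: 'a measure)) borel (\<lambda>u. Q (sel (fst u), snd u))
      = distr (distr (\<gamma> \<Otimes>\<^sub>M (std_gauss :: 'a measure)) (borel \<Otimes>\<^sub>M borel) (\<lambda>u. (sel (fst u), snd u))) borel Q"
    by (subst distr_distr[OF Qm psim]) (simp add: o_def)
  also have "\<dots> = P \<mu>" unfolding pm P_def ..
  finally show ?thesis .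
qed

lemma coupling_step:
  assumes "\<gamma> \<in> couplings \<mu> \<pi>"
  shows "distr (\<gamma> \<Otimes>\<^sub>M (std_gauss :: 'a measure)) (borel \<Otimes>\<^sub>M borel) \<Phi> \<in> couplings (P \<mu>) (P \<pi>)"
proof -
  have pg: "prob_space \<gamma>" and s: "sets \<gamma> = sets (borel \<Otimes>\<^sub>M borel)"
    and m1: "distr \<gamma> borel fst = \<mu>" and m2: "distr \<gamma> borel snd = \<pi>"
    using assms by (auto simp: couplings_def)
  have pp: "prob_space (\<gamma> \<Otimes>\<^sub>M (std_gauss :: 'a measure))" by (rule prob_space_pair[OF pg prob_space_std_gauss])
  note Pm = \<Phi>m[OF s]
  have "prob_space (distr (\<gamma> \<Otimes>\<^sub>M (std_gauss :: 'a measure)) (borel \<Otimes>\<^sub>M borel) \<Phi>)"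
    by (rule prob_space.prob_space_distr[OF pp Pm])
  moreover have "distr (distr (\<gamma> \<Otimes>\<^sub>M (std_gauss :: 'a measure)) (borel \<Otimes>\<^sub>M borel) \<Phi>) borel fst = P \<mu>"
  proof -
    have "distr (distr (\<gamma> \<Otimes>\<^sub>M (std_gauss :: 'a measure)) (borel \<Otimes>\<^sub>M borel) \<Phi>) borel fst
        = distr (\<gamma> \<Otimes>\<^sub>M (std_gauss :: 'a measure)) borel (\<lambda>u. Q (fst (fst u), snd u))"
      by (subst distr_distr[OF measurable_fst Pm]) (simp add: o_def \<Phi>_def)
    also have "\<dots> = P \<mu>" by (rule marg[OF s measurable_fst m1])
    finally show ?thesis .
  qed
  moreover have "distr (distr (\<gamma> \<Otimes>\<^sub>M (std_gauss :: 'a measure)) (borel \<Otimes>\<^sub>M borel) \<Phi>) borel snd = P \<pi>"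
  proof -
    have "distr (distr (\<gamma> \<Otimes>\<^sub>M (std_gauss :: 'a measure)) (borel \<Otimes>\<^sub>M borel) \<Phi>) borel snd
        = distr (\<gamma> \<Otimes>\<^sub>M (std_gauss :: 'a measure)) borel (\<lambda>u. Q (snd (fst u), snd u))"
      by (subst distr_distr[OF measurable_snd Pm]) (simp add: o_def \<Phi>_def)
    also have "\<dots> = P \<pi>" by (rule marg[OF s measurable_snd m2])
    finally show ?thesis .
  qed
  ultimately show ?thesis unfolding couplings_def by simp
qed

end

context qstep
begin

lemma nn_exp_meas: "(\<lambda>w. ennreal (exp ((norm (case w of (a, b) \<Rightarrow> a - b))^2 / l^2))) \<in> borel_measurable (borel \<Otimes>\<^sub>M (borel :: 'a measure))"
  by measurable

lemma psi_step:
  assumes "\<gamma> \<in> couplings \<mu> \<pi>"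
  shows "psi_norm (distr (\<gamma> \<Otimes>\<^sub>M (std_gauss :: 'a measure)) (borel \<Otimes>\<^sub>M borel) \<Phi>) (\<lambda>(a, b). a - b)
         \<le> ereal c * psi_norm \<gamma> (\<lambda>(a, b). a - b)"
proof -
  have pg: "prob_space \<gamma>" and s: "sets \<gamma> = sets (borel \<Otimes>\<^sub>M borel)"
    using assms by (auto simp: couplings_def)
  note Pm = \<Phi>m[OF s]
  define \<gamma>' where "\<gamma>' = distr (\<gamma> \<Otimes>\<^sub>M (std_gauss :: 'a measure)) (borel \<Otimes>\<^sub>M borel) \<Phi>"
  define A where "A M = {ereal l |l. l > 0 \<and> (\<integral>\<^sup>+ w. ennreal (exp ((norm (case w of (a, b) \<Rightarrow> a - b))^2 / l^2)) \<partial>M) \<le> 2}"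
    for M :: "('a \<times> 'a) measure"
  have key: "ereal (c * l) \<in> A \<gamma>'" if l: "ereal l \<in> A \<gamma>" for l
  proof -
    from l have l0: "0 < l" and int: "(\<integral>\<^sup>+ w. ennreal (exp ((norm (case w of (a, b) \<Rightarrow> a - b))^2 / l^2)) \<partial>\<gamma>) \<le> 2"
      unfolding A_def by auto
    have mG: "(\<lambda>u. ennreal (exp ((norm (fst (fst u) - snd (fst u)))^2 / l^2))) \<in> borel_measurable (\<gamma> \<Otimes>\<^sub>M (std_gauss :: 'a measure))"
      by (subst measurable_cong_sets[OF sets_pair_measure_cong[OF s sets_std_gauss] refl]) measurable
    have "(\<integral>\<^sup>+ w. ennreal (exp ((norm (case w of (a, b) \<Rightarrow> a - b))^2 / (c * l)^2)) \<partial>\<gamma>')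
        = (\<integral>\<^sup>+ u. ennreal (exp ((norm (case \<Phi> u of (a, b) \<Rightarrow> a - b))^2 / (c * l)^2)) \<partial>(\<gamma> \<Otimes>\<^sub>M (std_gauss :: 'a measure)))"
      unfolding \<gamma>'_def by (rule nn_integral_distr[OF Pm]) (subst measurable_cong_sets[OF sets_distr refl], rule nn_exp_meas)
    also have "\<dots> \<le> (\<integral>\<^sup>+ u. ennreal (exp ((norm (fst (fst u) - snd (fst u)))^2 / l^2)) \<partial>(\<gamma> \<Otimes>\<^sub>M (std_gauss :: 'a measure)))"
    proof (rule nn_integral_mono)
      fix u :: "('a \<times> 'a) \<times> 'a"
      have "norm (Q (fst (fst u), snd u) - Q (snd (fst u), snd u)) \<le> c * norm (fst (fst u) - snd (fst u))"
        by (rule contr)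
      then have "(norm (Q (fst (fst u), snd u) - Q (snd (fst u), snd u)))^2 \<le> (c * norm (fst (fst u) - snd (fst u)))^2"
        by (intro power_mono) auto
      then have "(norm (Q (fst (fst u), snd u) - Q (snd (fst u), snd u)))^2 / (c * l)^2 \<le> (c * norm (fst (fst u) - snd (fst u)))^2 / (c * l)^2"
        by (intro divide_right_mono) auto
      also have "\<dots> = (norm (fst (fst u) - snd (fst u)))^2 / l^2"
        using c_pos l0 by (simp add: power_mult_distrib)
      finally show "ennreal (exp ((norm (case \<Phi> u of (a, b) \<Rightarrow> a - b))^2 / (c * l)^2))
          \<le> ennreal (exp ((norm (fst (fst u) - snd (fst u)))^2 / l^2))"
        by (simp add: \<Phi>_def)
    qed
    also have "\<dots> = (\<integral>\<^sup>+ p. (\<integral>\<^sup>+ v. ennreal (exp ((norm (fst p - snd p))^2 / l^2)) \<partial>(std_gauss :: 'a measure)) \<partial>\<gamma>)"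
      using sigma_finite_measure.nn_integral_fst[OF sigma_finite_std_gauss mG] by simp
    also have "\<dots> = (\<integral>\<^sup>+ p. ennreal (exp ((norm (fst p - snd p))^2 / l^2)) \<partial>\<gamma>)"
      by (simp add: prob_space.emeasure_space_1[OF prob_space_std_gauss])
    also have "\<dots> = (\<integral>\<^sup>+ w. ennreal (exp ((norm (case w of (a, b) \<Rightarrow> a - b))^2 / l^2)) \<partial>\<gamma>)"
      by (simp add: split_beta')
    also have "\<dots> \<le> 2" by (rule int)
    finally show ?thesis unfolding A_def using c_pos l0 by auto
  qed
  have "psi_norm \<gamma>' (\<lambda>(a, b). a - b) \<le> Inf {ereal c * x |x. x \<in> A \<gamma>}"
  proof (rule Inf_greatest)
    fix y assume "y \<in> {ereal c * x |x. x \<in> A \<gamma>}"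
    then obtain x where y0: "y = ereal c * x" and x: "x \<in> A \<gamma>" by blast
    from x obtain l where xl: "x = ereal l" unfolding A_def by blast
    have l: "ereal l \<in> A \<gamma>" using x xl by simp
    have y: "y = ereal c * ereal l" using y0 xl by simp
    have "psi_norm \<gamma>' (\<lambda>(a, b). a - b) = Inf (A \<gamma>')" by (simp add: psi_norm_def A_def)
    also have "\<dots> \<le> ereal (c * l)" by (rule Inf_lower[OF key[OF l]])
    finally show "psi_norm \<gamma>' (\<lambda>(a, b). a - b) \<le> y" by (simp add: y)
  qed
  also have "Inf {ereal c * x |x. x \<in> A \<gamma>} = ereal c * Inf {x. x \<in> A \<gamma>}"
    by (rule ereal_Inf_cmult[OF c_pos])
  also have "Inf {x. x \<in> A \<gamma>} = psi_norm \<gamma> (\<lambda>(a, b). a - b)" by (simp add: psi_norm_def A_def)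
  finally show ?thesis unfolding \<gamma>'_def .
qed

lemma W_step:
  shows "W_psi (P \<mu>) (P \<pi>) \<le> ereal c * W_psi \<mu> \<pi>"
proof -
  define f where "f \<gamma> = psi_norm \<gamma> (\<lambda>(a, b). a - b)" for \<gamma> :: "('a \<times> 'a) measure"
  have "W_psi (P \<mu>) (P \<pi>) \<le> Inf {ereal c * x |x. x \<in> f ` couplings \<mu> \<pi>}"
  proof (rule Inf_greatest)
    fix y assume "y \<in> {ereal c * x |x. x \<in> f ` couplings \<mu> \<pi>}"
    then obtain \<gamma> where y: "y = ereal c * f \<gamma>" and g: "\<gamma> \<in> couplings \<mu> \<pi>" by auto
    have "W_psi (P \<mu>) (P \<pi>) \<le> f (distr (\<gamma> \<Otimes>\<^sub>M (std_gauss :: 'a measure)) (borel \<Otimes>\<^sub>M borel) \<Phi>)"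
      unfolding W_psi_def f_def by (rule INF_lower[OF coupling_step[OF g]])
    also have "\<dots> \<le> y" unfolding y f_def by (rule psi_step[OF g])
    finally show "W_psi (P \<mu>) (P \<pi>) \<le> y" .
  qed
  also have "\<dots> = ereal c * Inf {x. x \<in> f ` couplings \<mu> \<pi>}"
    by (rule ereal_Inf_cmult[OF c_pos])
  also have "Inf {x. x \<in> f ` couplings \<mu> \<pi>} = W_psi \<mu> \<pi>" by (simp add: W_psi_def f_def)
  finally show ?thesis .
qed

end

context hmc_pot
begin

lemma q_contract:
  assumes T: "0 < T" and LT: "L * T^2 \<le> 1/20" and h: "0 \<le> h" "0 < h \<Longrightarrow> (\<exists>N::nat. T = real N * h)"
  shows "norm (q_th grad T h x v - q_th grad T h y v) \<le> (1 - \<alpha> * T^2 / 10) * norm (x - y)"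
proof (cases "h = 0")
  case True
  then show ?thesis using flow_contract[OF T LT, of x v y] by (simp add: q_th_def ham_flow_sol)
next
  case False
  then have hp: "0 < h" using h(1) by simp
  obtain N :: nat where N: "T = real N * h" using h(2)[OF hp] by blast
  have "T / h = real N" using N hp by simp
  then have fl: "nat \<lfloor>T / h\<rfloor> = N" by simp
  have NT: "real N * h = T" using N by simp
  show ?thesis using leap_contract[OF hp NT LT, of x v y] False by (simp add: q_th_def fl)
qed

lemma grad_isCont: "isCont grad x"
  using has_derivative_continuous[OF hess[of x]] .

lemma leap_isCont: "isCont (leap_step grad h) z"
  unfolding leap_step_def Let_def
  by (auto intro!: continuous_intros isCont_o2[OF _ grad_isCont])

lemma leap_iter_isCont: "isCont (leap_step grad h ^^ n) z"
proof (induction n arbitrary: z)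
  case 0 then show ?case by simp
next
  case (Suc n)
  show ?case unfolding funpow.simps(2)
    by (rule continuous_at_compose[OF Suc.IH leap_isCont])
qed

lemma q_cont:
  assumes T: "0 < T"
  shows "continuous_on UNIV (\<lambda>p. q_th grad T h (fst p) (snd p))"
proof (cases "h = 0")
  case True
  then show ?thesis using flow_continuous[of T] T by (simp add: q_th_def)
next
  case False
  have eq: "(\<lambda>p. q_th grad T h (fst p) (snd p)) = (\<lambda>p. fst ((leap_step grad h ^^ nat \<lfloor>T / h\<rfloor>) p))"
    using False by (simp add: q_th_def fun_eq_iff)
  show ?thesis unfolding eq
    by (intro continuous_at_imp_continuous_on ballI continuous_intros leap_iter_isCont isCont_o2[OF leap_iter_isCont])
qed

end

theorem proposition3:
  fixes f :: "'a::euclidean_space \<Rightarrow> real"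
    and grad :: "'a \<Rightarrow> 'a"
    and H :: "'a \<Rightarrow> 'a \<Rightarrow>\<^sub>L 'a"
    and \<mu> \<pi> :: "'a measure"
    and L \<alpha> T h :: real
    and k :: nat
  assumes min0: "f 0 = 0" "\<And>x. f 0 \<le> f x"
    and grad: "\<And>x. (f has_derivative (\<lambda>u. grad x \<bullet> u)) (at x)"
    and hess: "\<And>x. (grad has_derivative blinfun_apply (H x)) (at x)"
    and hess_cont: "continuous_on UNIV H"
    and hess_bound: "\<And>x. norm (H x) \<le> L"
    and strong: "\<alpha> > 0" "\<And>x u. \<alpha> * (norm u)^2 \<le> u \<bullet> blinfun_apply (H x) u"
    and \<mu>: "prob_space \<mu>" "sets \<mu> = sets borel"
    and \<pi>: "prob_space \<pi>" "sets \<pi> = sets borel"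
    and T: "T > 0" "L * T^2 \<le> 1/20"
    and h: "h \<ge> 0" "h > 0 \<Longrightarrow> (\<exists>N::nat. T = real N * h)"
  shows "W_psi ((P_th grad T h ^^ k) \<mu>) ((P_th grad T h ^^ k) \<pi>)
           \<le> ereal ((1 - \<alpha> * T^2 / 10) ^ k) * W_psi \<mu> \<pi>"
proof -
  interpret hp: hmc_pot f grad H L \<alpha>
    by unfold_locales (use grad hess hess_bound strong in auto)
  define c where "c = 1 - \<alpha> * T^2 / 10"
  have c_pos: "0 < c"
  proof -
    have "\<alpha> * T^2 \<le> L * T^2" using hp.alpha_le_L by (intro mult_right_mono) auto
    then show ?thesis unfolding c_def using T by linarith
  qed
  define Q where "Q = (\<lambda>(x, v). q_th grad T h x v)"
  have Qe: "Q = (\<lambda>p. q_th grad T h (fst p) (snd p))" by (simp add: Q_def split_beta' fun_eq_iff)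
  have Qm: "Q \<in> borel_measurable (borel \<Otimes>\<^sub>M borel)"
    unfolding Qe borel_prod by (rule borel_measurable_continuous_onI[OF hp.q_cont[OF T(1)]])
  have contr: "norm (Q (x, v) - Q (y, v)) \<le> c * norm (x - y)" for x y v
    unfolding Q_def c_def using hp.q_contract[OF T h] by simp
  interpret qs: qstep Q c by unfold_locales (use Qm contr c_pos in auto)
  have Peq: "P_th grad T h = qs.P" unfolding fun_eq_iff P_th_def qs.P_def unfolding Q_def by simp
  have "W_psi ((qs.P ^^ k) \<mu>) ((qs.P ^^ k) \<pi>) \<le> ereal (c ^ k) * W_psi \<mu> \<pi>"
  proof (induction k)
    case 0 then show ?case by simp
  next
    case (Suc k)
    have "W_psi ((qs.P ^^ Suc k) \<mu>) ((qs.P ^^ Suc k) \<pi>) \<le> ereal c * W_psi ((qs.P ^^ k) \<mu>) ((qs.P ^^ k) \<pi>)"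
      by (simp add: qs.W_step)
    also have "\<dots> \<le> ereal c * (ereal (c ^ k) * W_psi \<mu> \<pi>)"
      by (rule ereal_mult_left_mono[OF Suc.IH]) (use c_pos in simp)
    also have "\<dots> = ereal (c ^ Suc k) * W_psi \<mu> \<pi>"
    proof -
      have "ereal (c ^ Suc k) = ereal c * ereal (c ^ k)" by simp
      then show ?thesis by (simp only: mult.assoc)
    qed
    finally show ?case .
  qed
  then show ?thesis unfolding Peq c_def .
qed

end
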